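(* The following are equivalent: (a) $U_0=U_1=\dots=U_n=0$ (zero vectors); (b) for every $k\in\mathbb{R}^m\setminus\{0\}$ every eigenvalue of $\mathcal{N}(k)$ is purely imaginary. Moreover, if some $U_i\neq0$, there exist $k\in\mathbb{R}^m\setminus\{0\}$ and an eigenvalue $\lambda$ of $\mathcal{N}(k)$ with $\operatorname{Re}\lambda>0$ (the linear problem in $m+1$ spatial dimensions is asymptotically unstable), while if all $U_i=0$ it is asymptotically stable.
   Context: Fix $m\ge1$, $n\ge1$, real numbers $h_0<h_1<\dots<h_{n+1}$, $\Delta h_i=h_{i+1}-h_i$ ($0\le i\le n$), and vectors $U_0,\dots,U_n\in\mathbb{R}^m$. For $k\in\mathbb{R}^m\setminus\{0\}$, with $\rho=\|k\|$, define the symmetric tridiagonal $n\times n$ real matrices (indices $1\le i\le n$; off-diagonals $1\le i\le n-1$; other entries zero): $\mathcal{P}_{ii}=1+\frac{\coth(\rho\Delta h_{i-1})+\coth(\rho\Delta h_i)}{\rho}$, $\mathcal{P}_{i,i+1}=\mathcal{P}_{i+1,i}=-\frac{\operatorname{csch}(\rho\Delta h_i)}{\rho}$; $\mathcal{Q}_{ii}=\frac{(k\cdot U_{i-1})^2\coth(\rho\Delta h_{i-1})+(k\cdot U_i)^2\coth(\rho\Delta h_i)}{\rho}$, $\mathcal{Q}_{i,i+1}=\mathcal{Q}_{i+1,i}=-\frac{(k\cdot U_i)^2\operatorname{csch}(\rho\Delta h_i)}{\rho}$; $\mathcal{R}_{ii}=\frac{(k\cdot U_{i-1})\coth(\rho\Delta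 h_{i-1})+(k\cdot U_i)\coth(\rho\Delta h_i)}{\rho}$, $\mathcal{R}_{i,i+1}=\mathcal{R}_{i+1,i}=-\frac{(k\cdot U_i)\operatorname{csch}(\rho\Delta h_i)}{\rho}$. Set $\mathcal{N}_1(k)=\begin{pmatrix}I_n&0\\0&\mathcal{P}(k)\end{pmatrix}$, $\mathcal{N}_2(k)=\begin{pmatrix}0&I_n\\\mathcal{Q}(k)-\|k\|^4I_n&-2i\,\mathcal{R}(k)\end{pmatrix}$, $\mathcal{N}(k)=\mathcal{N}_1(k)^{-1}\mathcal{N}_2(k)$. Instability is detected by an eigenvalue of $\mathcal{N}(k)$ with positive real part for some $k$. *)

theory Defs
  imports "Jordan_Normal_Form.Jordan_Normal_Form"
begin

definition coth :: "real \<Rightarrow> real" where "coth x = cosh x / sinh x"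
definition csch :: "real \<Rightarrow> real" where "csch x = 1 / sinh x"

definition dh :: "(nat \<Rightarrow> real) \<Rightarrow> nat \<Rightarrow> real" where "dh h i = h (Suc i) - h i"

definition vnorm :: "real vec \<Rightarrow> real" where "vnorm k = sqrt (k \<bullet> k)"

(* Generic symmetric tridiagonal n x n matrix, 0-based indices: paper index i = our index i+1.
   Diagonal entry (i,i) = (a i * coth(rho dh_i) + a (i+1) * coth(rho dh_(i+1))) / rho,
   off-diagonal (i,i+1) = (i+1,i) = - a (i+1) * csch(rho dh_(i+1)) / rho. *)
definition tri_mat :: "nat \<Rightarrow> real \<Rightarrow> (nat \<Rightarrow> real) \<Rightarrow> (nat \<Rightarrow> real) \<Rightarrow> real mat" where
  "tri_mat n \<rho> h a = mat n n (\<lambda>(i,j).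
      if i = j then (a i * coth (\<rho> * dh h i) + a (Suc i) * coth (\<rho> * dh h (Suc i))) / \<rho>
      else if j = Suc i then - a (Suc i) * csch (\<rho> * dh h (Suc i)) / \<rho>
      else if i = Suc j then - a (Suc j) * csch (\<rho> * dh h (Suc j)) / \<rho>
      else 0)"

definition P_mat :: "nat \<Rightarrow> (nat \<Rightarrow> real) \<Rightarrow> real vec \<Rightarrow> real mat" where
  "P_mat n h k = 1\<^sub>m n + tri_mat n (vnorm k) h (\<lambda>_. 1)"

definition Q_mat :: "nat \<Rightarrow> (nat \<Rightarrow> real) \<Rightarrow> (nat \<Rightarrow> real vec) \<Rightarrow> real vec \<Rightarrow> real mat" where
  "Q_mat n h U k = tri_mat n (vnorm k) h (\<lambda>i. (k \<bullet> U i)^2)"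

definition R_mat :: "nat \<Rightarrow> (nat \<Rightarrow> real) \<Rightarrow> (nat \<Rightarrow> real vec) \<Rightarrow> real vec \<Rightarrow> real mat" where
  "R_mat n h U k = tri_mat n (vnorm k) h (\<lambda>i. k \<bullet> U i)"

definition cmat :: "real mat \<Rightarrow> complex mat" where "cmat A = map_mat complex_of_real A"

definition N1_mat :: "nat \<Rightarrow> (nat \<Rightarrow> real) \<Rightarrow> real vec \<Rightarrow> complex mat" where
  "N1_mat n h k = four_block_mat (1\<^sub>m n) (0\<^sub>m n n) (0\<^sub>m n n) (cmat (P_mat n h k))"

definition N2_mat :: "nat \<Rightarrow> (nat \<Rightarrow> real) \<Rightarrow> (nat \<Rightarrow> real vec) \<Rightarrow> real vec \<Rightarrow> complex mat" where
  "N2_mat n h U k = four_block_mat (0\<^sub>m n n) (1\<^sub>m n)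
      (cmat (Q_mat n h U k) - complex_of_real (vnorm k ^ 4) \<cdot>\<^sub>m 1\<^sub>m n)
      ((- 2 * \<i>) \<cdot>\<^sub>m cmat (R_mat n h U k))"

(* N = N1^{-1} N2 (N1 is invertible; mat_inverse is the library's matrix inverse) *)
definition N_mat :: "nat \<Rightarrow> (nat \<Rightarrow> real) \<Rightarrow> (nat \<Rightarrow> real vec) \<Rightarrow> real vec \<Rightarrow> complex mat" where
  "N_mat n h U k = the (mat_inverse (N1_mat n h k)) * N2_mat n h U k"

end

theory Submission
  imports Defs "HOL-Real_Asymp.Real_Asymp"
begin


lemma re_cnj_mult_ge: "Re (cnj a * b) \<ge> - ((cmod a)^2 + (cmod b)^2) / 2"
proof -
  have "\<bar>Re (cnj a * b)\<bar> \<le> cmod (cnj a * b)" by (rule abs_Re_le_cmod)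
  also have "\<dots> = cmod a * cmod b" by (simp add: norm_mult)
  also have "\<dots> \<le> ((cmod a)^2 + (cmod b)^2) / 2"
    using sum_squares_bound[of "cmod a" "cmod b"] by (simp add: power2_eq_square algebra_simps)
  finally show ?thesis by linarith
qed

lemma dom_qf:
  fixes A :: "real mat" and x :: "complex vec"
  assumes A: "A \<in> carrier_mat n n" and sym: "\<And>i j. i<n \<Longrightarrow> j<n \<Longrightarrow> A$$(i,j) = A$$(j,i)"
    and dom: "\<And>i. i<n \<Longrightarrow> A$$(i,i) - (\<Sum>j<n. if j = i then 0 else \<bar>A$$(i,j)\<bar>) \<ge> \<epsilon>"
    and x: "x \<in> carrier_vec n"
  shows "Im (\<Sum>i<n. cnj (x$i) * (cmat A *\<^sub>v x)$i) = 0"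
    and "Re (\<Sum>i<n. cnj (x$i) * (cmat A *\<^sub>v x)$i) \<ge> \<epsilon> * (\<Sum>i<n. (cmod (x$i))^2)"
proof -
  have mv: "(cmat A *\<^sub>v x)$i = (\<Sum>j<n. of_real (A$$(i,j)) * x$j)" if "i < n" for i
    using A x that unfolding cmat_def
    by (auto simp: mult_mat_vec_def scalar_prod_def lessThan_atLeast0 intro!: sum.cong)
  define q where "q = (\<Sum>i<n. cnj (x$i) * (cmat A *\<^sub>v x)$i)"
  have q: "q = (\<Sum>i<n. \<Sum>j<n. of_real (A$$(i,j)) * (cnj (x$i) * x$j))"
    unfolding q_def by (rule sum.cong, simp, simp add: mv sum_distrib_left algebra_simps)
  have "cnj q = (\<Sum>i<n. \<Sum>j<n. of_real (A$$(i,j)) * (cnj (x$j) * x$i))"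
    unfolding q by (simp add: algebra_simps)
  also have "\<dots> = (\<Sum>j<n. \<Sum>i<n. of_real (A$$(i,j)) * (cnj (x$j) * x$i))"
    by (rule sum.swap)
  also have "\<dots> = q" unfolding q
    by (rule sum.cong, simp, rule sum.cong, simp, simp add: sym)
  finally have "cnj q = q" .
  then show "Im q = 0" unfolding q_def[symmetric]
    by (metis Reals_cnj_iff complex_is_Real_iff)
  have Req: "Re q = (\<Sum>i<n. \<Sum>j<n. A$$(i,j) * Re (cnj (x$i) * x$j))"
    unfolding q by (simp add: Re_sum)
  define s where "s i j = (if j = i then 0 else \<bar>A$$(i,j)\<bar>)" for i j
  have trm: "A$$(i,j) * Re (cnj (x$i) * x$j) \<ge>
     (if j = i then A$$(i,i) * (cmod (x$i))^2 else 0) - s i j * ((cmod (x$i))^2 + (cmod (x$j))^2)/2" for i j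
  proof (cases "j = i")
    case True
    have "Re (cnj (x$i) * x$i) = (cmod (x$i))^2"
      by (simp only: cmod_power2) (simp add: power2_eq_square) 
    then show ?thesis using True by (simp add: s_def)
  next
    case False
    have "\<bar>A$$(i,j) * Re (cnj (x$i) * x$j)\<bar> \<le> \<bar>A$$(i,j)\<bar> * (((cmod (x$i))^2 + (cmod (x$j))^2)/2)"
    proof -
      have "\<bar>Re (cnj (x$i) * x$j)\<bar> \<le> ((cmod (x$i))^2 + (cmod (x$j))^2)/2"
        using re_cnj_mult_ge[of "x$i" "x$j"] re_cnj_mult_ge[of "- x$i" "x$j"]
        unfolding abs_le_iff by (simp only: complex_cnj_minus mult_minus_left norm_minus_cancel uminus_complex.sel) linarith
      then show ?thesis unfolding abs_mult by (intro mult_left_mono) auto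
    qed
    then show ?thesis using False by (simp add: s_def abs_le_iff)
  qed
  have swap: "(\<Sum>i<n. \<Sum>j<n. s i j * (cmod (x$j))^2) = (\<Sum>i<n. \<Sum>j<n. s i j * (cmod (x$i))^2)"
  proof -
    have "(\<Sum>i<n. \<Sum>j<n. s i j * (cmod (x$j))^2) = (\<Sum>j<n. \<Sum>i<n. s i j * (cmod (x$j))^2)"
      by (rule sum.swap)
    also have "\<dots> = (\<Sum>i<n. \<Sum>j<n. s i j * (cmod (x$i))^2)"
      by (rule sum.cong, simp, rule sum.cong, simp, simp add: s_def sym)
    finally show ?thesis .
  qed
  have "\<epsilon> * (\<Sum>i<n. (cmod (x$i))^2) = (\<Sum>i<n. \<epsilon> * (cmod (x$i))^2)" by (simp add: sum_distrib_left)
  also have "\<dots> \<le> (\<Sum>i<n. (A$$(i,i) - (\<Sum>j<n. s i j)) * (cmod (x$i))^2)"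
    by (intro sum_mono mult_right_mono, insert dom, auto simp: s_def)
  also have "\<dots> = (\<Sum>i<n. A$$(i,i) * (cmod (x$i))^2) - (\<Sum>i<n. \<Sum>j<n. s i j * (cmod (x$i))^2)/2
        - (\<Sum>i<n. \<Sum>j<n. s i j * (cmod (x$i))^2)/2"
    by (simp add: sum_subtractf sum_distrib_right algebra_simps)
  also have "\<dots> = (\<Sum>i<n. A$$(i,i) * (cmod (x$i))^2) - (\<Sum>i<n. \<Sum>j<n. s i j * (cmod (x$i))^2)/2
        - (\<Sum>i<n. \<Sum>j<n. s i j * (cmod (x$j))^2)/2" by (simp only: swap)
  also have "\<dots> = (\<Sum>i<n. \<Sum>j<n. (if j = i then A$$(i,i) * (cmod (x$i))^2 else 0) - s i j * ((cmod (x$i))^2 + (cmod (x$j))^2)/2)"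
    by (simp add: sum_subtractf sum.distrib sum_divide_distrib algebra_simps add_divide_distrib)
  also have "\<dots> \<le> Re q"
    unfolding Req by (intro sum_mono trm)
  finally show "Re q \<ge> \<epsilon> * (\<Sum>i<n. (cmod (x$i))^2)" .
qed



lemma dh_pos: "\<forall>i\<le>n. h i < h (Suc i) \<Longrightarrow> i \<le> n \<Longrightarrow> dh h i > 0"
  unfolding dh_def by auto

lemma csch_pos: "x > 0 \<Longrightarrow> csch x > 0"
  unfolding csch_def by simp

lemma csch_le_coth: "x > 0 \<Longrightarrow> csch x \<le> coth x"
  unfolding csch_def coth_def using cosh_real_ge_1[of x] by (simp add: divide_right_mono)

lemma sum_delta_le: "b \<ge> 0 \<Longrightarrow> (\<Sum>j<(n::nat). if j = a then (b::real) else 0) \<le> b"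
  by (subst sum.delta) simp_all

lemma sum_delta_le2: "(b::real) \<ge> 0 \<Longrightarrow> (\<Sum>j<n. if Suc j = i then b else 0) \<le> b"
proof -
  assume b: "b \<ge> 0"
  have "(\<Sum>j<n. if Suc j = i then b else 0) \<le> (\<Sum>j<n. if j = i - 1 then b else 0)"
    by (rule sum_mono, insert b, auto)
  also have "\<dots> \<le> b" using sum_delta_le[OF b] by blast
  finally show ?thesis .
qed

lemma P_mat_carrier: "P_mat n h k \<in> carrier_mat n n"
  unfolding P_mat_def tri_mat_def by simp

lemma P_mat_entry: "i < n \<Longrightarrow> j < n \<Longrightarrow> P_mat n h k $$ (i,j) =
   (if i = j then 1 + (coth (vnorm k * dh h i) + coth (vnorm k * dh h (Suc i))) / vnorm k
    else if j = Suc i then - csch (vnorm k * dh h (Suc i)) / vnorm k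
    else if i = Suc j then - csch (vnorm k * dh h (Suc j)) / vnorm k else 0)"
  unfolding P_mat_def tri_mat_def by simp

lemma P_mat_dom:
  assumes h: "\<forall>i\<le>n. h i < h (Suc i)" and rho: "vnorm k > 0"
    and c: "\<And>l. l \<le> n \<Longrightarrow> (coth (vnorm k * dh h l) - csch (vnorm k * dh h l)) / vnorm k \<ge> c"
  shows "\<And>i. i<n \<Longrightarrow> P_mat n h k $$(i,i) - (\<Sum>j<n. if j = i then 0 else \<bar>P_mat n h k $$(i,j)\<bar>) \<ge> 1 + 2 * c"
proof -
  fix i assume i: "i < n"
  let ?r = "vnorm k"
  let ?s = "\<lambda>l. csch (?r * dh h l) / ?r" and ?c = "\<lambda>l. coth (?r * dh h l) / ?r"
  have spos: "?s l \<ge> 0" if "l \<le> n" for l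
    using csch_pos[of "?r * dh h l"] dh_pos[OF h that] rho by simp
  have "(\<Sum>j<n. if j = i then 0 else \<bar>P_mat n h k $$(i,j)\<bar>) \<le>
        (\<Sum>j<n. (if j = Suc i then ?s (Suc i) else 0) + (if Suc j = i then ?s i else 0))"
  proof (rule sum_mono)
    fix j assume j: "j \<in> {..<n}"
    show "(if j = i then 0 else \<bar>P_mat n h k $$(i,j)\<bar>) \<le> (if j = Suc i then ?s (Suc i) else 0) + (if Suc j = i then ?s i else 0)"
      using j i spos[of "Suc i"] spos[of i] by (auto simp: P_mat_entry)
  qed
  also have "\<dots> \<le> ?s (Suc i) + ?s i"
    unfolding sum.distrib using sum_delta_le[OF spos[of "Suc i"], where n=n and a="Suc i"] sum_delta_le2[OF spos[of i], where n=n and i=i] i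
    by linarith
  finally have off: "(\<Sum>j<n. if j = i then 0 else \<bar>P_mat n h k $$(i,j)\<bar>) \<le> ?s (Suc i) + ?s i" .
  have diag: "P_mat n h k $$(i,i) = 1 + ?c i + ?c (Suc i)" using i by (simp add: P_mat_entry add_divide_distrib)
  have "?c i - ?s i \<ge> c" using c[of i] i by (simp add: diff_divide_distrib)
  moreover have "?c (Suc i) - ?s (Suc i) \<ge> c" using c[of "Suc i"] i by (simp add: diff_divide_distrib)
  ultimately show "P_mat n h k $$(i,i) - (\<Sum>j<n. if j = i then 0 else \<bar>P_mat n h k $$(i,j)\<bar>) \<ge> 1 + 2 * c"
    using off diag by linarith
qed

lemma P_mat_sym: "i < n \<Longrightarrow> j < n \<Longrightarrow> P_mat n h k $$ (i,j) = P_mat n h k $$ (j,i)"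
  by (auto simp: P_mat_entry)



definition ctri :: "nat \<Rightarrow> real \<Rightarrow> (nat \<Rightarrow> real) \<Rightarrow> (nat \<Rightarrow> complex) \<Rightarrow> complex mat" where
  "ctri n \<rho> h a = mat n n (\<lambda>(i,j).
      if i = j then (a i * of_real (coth (\<rho> * dh h i)) + a (Suc i) * of_real (coth (\<rho> * dh h (Suc i)))) / of_real \<rho>
      else if j = Suc i then - a (Suc i) * of_real (csch (\<rho> * dh h (Suc i))) / of_real \<rho>
      else if i = Suc j then - a (Suc j) * of_real (csch (\<rho> * dh h (Suc j))) / of_real \<rho>
      else 0)"

definition Lm :: "nat \<Rightarrow> (nat \<Rightarrow> real) \<Rightarrow> (nat \<Rightarrow> real vec) \<Rightarrow> real vec \<Rightarrow> complex \<Rightarrow> complex mat" where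
  "Lm n h U k z = (z^2 + of_real (vnorm k ^ 4)) \<cdot>\<^sub>m 1\<^sub>m n + ctri n (vnorm k) h (\<lambda>l. (z + \<i> * of_real (k \<bullet> U l))^2)"

lemma ctri_carrier[simp]: "ctri n \<rho> h a \<in> carrier_mat n n"
  unfolding ctri_def by simp

lemma Lm_carrier[simp]: "Lm n h U k z \<in> carrier_mat n n"
  unfolding Lm_def by simp

lemma Lm_dim[simp]: "dim_row (Lm n h U k z) = n" "dim_col (Lm n h U k z) = n"
  unfolding Lm_def ctri_def by simp_all

lemma cmat_carrier[simp]: "A \<in> carrier_mat n m \<Longrightarrow> cmat A \<in> carrier_mat n m"
  unfolding cmat_def by simp

lemma cmat_index[simp]: "i < dim_row A \<Longrightarrow> j < dim_col A \<Longrightarrow> cmat A $$ (i,j) = of_real (A $$ (i,j))"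
  unfolding cmat_def by simp

lemma cmat_dim[simp]: "dim_row (cmat A) = dim_row A" "dim_col (cmat A) = dim_col A"
  unfolding cmat_def by simp_all

lemma tri_dim[simp]: "dim_row (tri_mat n \<rho> h a) = n" "dim_col (tri_mat n \<rho> h a) = n"
  unfolding tri_mat_def by simp_all

lemma R_dim[simp]: "dim_row (R_mat n h U k) = n" "dim_col (R_mat n h U k) = n"
  unfolding R_mat_def by simp_all

lemma Q_dim[simp]: "dim_row (Q_mat n h U k) = n" "dim_col (Q_mat n h U k) = n"
  unfolding Q_mat_def by simp_all

lemma P_dim[simp]: "dim_row (P_mat n h k) = n" "dim_col (P_mat n h k) = n"
  unfolding P_mat_def by simp_all

lemma tri_carrier[simp]: "tri_mat n \<rho> h a \<in> carrier_mat n n"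
  unfolding tri_mat_def by simp

lemma Q_carrier[simp]: "Q_mat n h U k \<in> carrier_mat n n" unfolding Q_mat_def by simp
lemma R_carrier[simp]: "R_mat n h U k \<in> carrier_mat n n" unfolding R_mat_def by simp

lemma N1_carrier: "N1_mat n h k \<in> carrier_mat (n+n) (n+n)"
  unfolding N1_mat_def using P_mat_carrier[of n h k] by simp

lemma N2_carrier: "N2_mat n h U k \<in> carrier_mat (n+n) (n+n)"
  unfolding N2_mat_def by simp

lemma det_N1: "det (N1_mat n h k) = det (cmat (P_mat n h k))"
  unfolding N1_mat_def
  by (subst det_four_block_mat_lower_left_zero[of _ n _ n], insert P_mat_carrier[of n h k], auto)

lemma N_props:
  assumes d: "det (cmat (P_mat n h k)) \<noteq> 0"
  shows "N_mat n h U k \<in> carrier_mat (n+n) (n+n)"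
    and "N1_mat n h k * (z \<cdot>\<^sub>m 1\<^sub>m (n+n) - N_mat n h U k) = z \<cdot>\<^sub>m N1_mat n h k - N2_mat n h U k"
proof -
  let ?N1 = "N1_mat n h k" and ?N2 = "N2_mat n h U k"
  have N1: "?N1 \<in> carrier_mat (n+n) (n+n)" by (rule N1_carrier)
  have N2: "?N2 \<in> carrier_mat (n+n) (n+n)" by (rule N2_carrier)
  have "det ?N1 \<noteq> 0" using d det_N1 by simp
  from det_non_zero_imp_unit[OF N1 this, of "()"]
  have U: "?N1 \<in> Units (ring_mat TYPE(complex) (n+n) ())" .
  have "mat_inverse ?N1 \<noteq> None"
  proof
    assume "mat_inverse ?N1 = None"
    from mat_inverse(1)[OF N1 this, where b="()"] U show False by blast
  qed
  then obtain B where B: "mat_inverse ?N1 = Some B" by blast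
  from mat_inverse(2)[OF N1 B] have NB: "?N1 * B = 1\<^sub>m (n+n)" and Bc: "B \<in> carrier_mat (n+n) (n+n)" by auto
  have Neq: "N_mat n h U k = B * ?N2" unfolding N_mat_def B by simp
  show Nc: "N_mat n h U k \<in> carrier_mat (n+n) (n+n)" unfolding Neq using Bc N2 by simp
  have "?N1 * (z \<cdot>\<^sub>m 1\<^sub>m (n+n) - N_mat n h U k) = ?N1 * (z \<cdot>\<^sub>m 1\<^sub>m (n+n)) - ?N1 * N_mat n h U k"
    by (rule mult_minus_distrib_mat[OF N1], insert Nc, auto)
  also have "?N1 * (z \<cdot>\<^sub>m 1\<^sub>m (n+n)) = z \<cdot>\<^sub>m ?N1"
    using mult_smult_distrib[OF N1 one_carrier_mat, of z] N1 by simp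
  also have "?N1 * N_mat n h U k = ?N2" unfolding Neq
    using assoc_mult_mat[OF N1 Bc N2, symmetric] NB N2 by simp
  finally show "?N1 * (z \<cdot>\<^sub>m 1\<^sub>m (n+n) - N_mat n h U k) = z \<cdot>\<^sub>m ?N1 - ?N2" .
qed



lemma tri_sym: "i < n \<Longrightarrow> j < n \<Longrightarrow> tri_mat n \<rho> h a $$ (i,j) = tri_mat n \<rho> h a $$ (j,i)"
  unfolding tri_mat_def by auto

lemma det_zN:
  fixes z :: complex and n :: nat and h :: "nat \<Rightarrow> real" and U :: "nat \<Rightarrow> real vec" and k :: "real vec"
  defines "K \<equiv> cmat (Q_mat n h U k) - complex_of_real (vnorm k ^ 4) \<cdot>\<^sub>m 1\<^sub>m n"
  defines "D \<equiv> z \<cdot>\<^sub>m cmat (P_mat n h k) + (2 * \<i>) \<cdot>\<^sub>m cmat (R_mat n h U k)"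
  assumes rho: "vnorm k \<noteq> 0"
  shows "det (z \<cdot>\<^sub>m N1_mat n h k - N2_mat n h U k) = det (Lm n h U k z)"
proof -
  let ?M = "z \<cdot>\<^sub>m N1_mat n h k - N2_mat n h U k"
  have Pc: "P_mat n h k \<in> carrier_mat n n" by (rule P_mat_carrier)
  have Kc: "K \<in> carrier_mat n n" unfolding K_def by (intro minus_carrier_mat smult_carrier_mat one_carrier_mat)
  have Dc: "D \<in> carrier_mat n n" unfolding D_def using Pc by simp
  have Mc: "?M \<in> carrier_mat (n+n) (n+n)" by (intro minus_carrier_mat N2_carrier)
  have Ksym: "K $$ (i,j) = K $$ (j,i)" if "i < n" "j < n" for i j
    using that tri_sym[of i n j] unfolding K_def Q_mat_def by auto
  have Dsym: "D $$ (i,j) = D $$ (j,i)" if "i < n" "j < n" for i j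
    using that tri_sym[of i n j] Pc P_mat_sym[of i n j h k] unfolding D_def R_mat_def by auto
  define T4 where "T4 = four_block_mat (z \<cdot>\<^sub>m 1\<^sub>m n) (- K) (- 1\<^sub>m n) D"
  have "transpose_mat ?M = T4"
  proof (rule eq_matI)
    show "dim_row (transpose_mat ?M) = dim_row T4" "dim_col (transpose_mat ?M) = dim_col T4"
      using Mc Kc Dc unfolding T4_def by auto
    fix i j assume i: "i < dim_row T4" and j: "j < dim_col T4"
    then have i': "i < n + n" and j': "j < n + n" using Kc Dc unfolding T4_def by auto
    have N1c: "N1_mat n h k \<in> carrier_mat (n+n) (n+n)" by (rule N1_carrier)
    have N2c: "N2_mat n h U k \<in> carrier_mat (n+n) (n+n)" by (rule N2_carrier)
    have "transpose_mat ?M $$ (i,j) = z * N1_mat n h k $$ (j,i) - N2_mat n h U k $$ (j,i)"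
      using i' j' N1c N2c by simp
    also have "\<dots> = T4 $$ (i,j)"
    proof -
      have e1: "N1_mat n h k $$ (j,i) = (if j < n then (if i < n then 1\<^sub>m n $$ (j,i) else 0)
          else (if i < n then 0 else cmat (P_mat n h k) $$ (j-n, i-n)))"
        using i' j' Pc unfolding N1_mat_def by auto
      have e2: "N2_mat n h U k $$ (j,i) = (if j < n then (if i < n then 0 else 1\<^sub>m n $$ (j, i-n))
          else (if i < n then K $$ (j-n, i) else (- 2 * \<i>) * cmat (R_mat n h U k) $$ (j-n, i-n)))"
        using i' j' Pc Kc unfolding N2_mat_def K_def[symmetric] by auto
      have e3: "T4 $$ (i,j) = (if i < n then (if j < n then (z \<cdot>\<^sub>m 1\<^sub>m n) $$ (i,j) else (- K) $$ (i, j-n))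
          else (if j < n then (- 1\<^sub>m n) $$ (i-n, j) else D $$ (i-n, j-n)))"
        using i' j' Kc Dc unfolding T4_def by auto
      show ?thesis unfolding e1 e2 e3
        using i' j' Kc Dc Pc Ksym[of "j - n" i] Dsym[of "i - n" "j - n"]
        by (auto simp: D_def algebra_simps)
    qed
    finally show "transpose_mat ?M $$ (i,j) = T4 $$ (i,j)" .
  qed
  then have "det ?M = det T4"
    using det_transpose[OF Mc] by simp
  also have "\<dots> = det ((z \<cdot>\<^sub>m 1\<^sub>m n) * D - (- K) * (- 1\<^sub>m n))"
    unfolding T4_def
    by (rule det_four_block_mat[of _ n], insert Kc Dc, auto)
  also have "(z \<cdot>\<^sub>m 1\<^sub>m n) * D - (- K) * (- 1\<^sub>m n) = Lm n h U k z"
  proof (rule eq_matI)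
    fix i j assume i: "i < dim_row (Lm n h U k z)" and j: "j < dim_col (Lm n h U k z)"
    then have i': "i < n" and j': "j < n" by auto
    have "((z \<cdot>\<^sub>m 1\<^sub>m n) * D - (- K) * (- 1\<^sub>m n)) $$ (i,j) = z * D $$ (i,j) - K $$ (i,j)"
      using i' j' Kc Dc by (simp add: mult_smult_assoc_mat)
    also have "\<dots> = Lm n h U k z $$ (i,j)"
      using i' j' Pc rho unfolding D_def K_def Lm_def P_mat_def Q_mat_def R_mat_def tri_mat_def ctri_def
      by (auto simp: field_simps power2_eq_square)
    finally show "((z \<cdot>\<^sub>m 1\<^sub>m n) * D - (- K) * (- 1\<^sub>m n)) $$ (i,j) = Lm n h U k z $$ (i,j)" .
  qed (insert Kc Dc, auto)
  finally show ?thesis .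
qed



definition qf :: "complex mat \<Rightarrow> complex vec \<Rightarrow> complex" where
  "qf A x = (\<Sum>i<dim_vec x. cnj (x$i) * (A *\<^sub>v x)$i)"

definition nsq :: "complex vec \<Rightarrow> real" where
  "nsq x = (\<Sum>i<dim_vec x. (cmod (x$i))^2)"

lemma nsq_pos: "x \<in> carrier_vec n \<Longrightarrow> x \<noteq> 0\<^sub>v n \<Longrightarrow> nsq x > 0"
proof -
  assume x: "x \<in> carrier_vec n" and nz: "x \<noteq> 0\<^sub>v n"
  then obtain i where i: "i < n" "x $ i \<noteq> 0" by (metis eq_vecI carrier_vecD index_zero_vec)
  have "nsq x \<ge> (cmod (x$i))^2" unfolding nsq_def using x i
    by (intro member_le_sum) auto
  moreover have "(cmod (x$i))^2 > 0" using i by simp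
  ultimately show ?thesis by linarith
qed

lemma P_qf:
  assumes h: "\<forall>i\<le>n. h i < h (Suc i)" and rho: "vnorm k > 0" and x: "x \<in> carrier_vec n"
    and c: "\<And>l. l \<le> n \<Longrightarrow> (coth (vnorm k * dh h l) - csch (vnorm k * dh h l)) / vnorm k \<ge> c"
  shows "Im (qf (cmat (P_mat n h k)) x) = 0" "Re (qf (cmat (P_mat n h k)) x) \<ge> (1 + 2 * c) * nsq x"
  using dom_qf[OF P_mat_carrier P_mat_sym P_mat_dom[OF h rho c] x] x
  unfolding qf_def nsq_def by auto

lemma coth_csch_nonneg:
  assumes h: "\<forall>i\<le>n. h i < h (Suc i)" and rho: "vnorm k > 0" and l: "l \<le> n"
  shows "(coth (vnorm k * dh h l) - csch (vnorm k * dh h l)) / vnorm k \<ge> 0"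
  using csch_le_coth[of "vnorm k * dh h l"] dh_pos[OF h l] rho by simp

lemma P_qf0:
  assumes h: "\<forall>i\<le>n. h i < h (Suc i)" and rho: "vnorm k > 0" and x: "x \<in> carrier_vec n"
  shows "Im (qf (cmat (P_mat n h k)) x) = 0" "Re (qf (cmat (P_mat n h k)) x) \<ge> nsq x"
  using P_qf[OF h rho x coth_csch_nonneg[OF h rho]] by auto

lemma qf_zero: "A \<in> carrier_mat n n \<Longrightarrow> x \<in> carrier_vec n \<Longrightarrow> A *\<^sub>v x = 0\<^sub>v n \<Longrightarrow> qf A x = 0"
  unfolding qf_def by auto

lemma det_P_nz:
  assumes h: "\<forall>i\<le>n. h i < h (Suc i)" and rho: "vnorm k > 0"
  shows "det (cmat (P_mat n h k)) \<noteq> 0"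
proof
  have Pc: "cmat (P_mat n h k) \<in> carrier_mat n n" using P_mat_carrier by simp
  assume "det (cmat (P_mat n h k)) = 0"
  then obtain x where x: "x \<in> carrier_vec n" "x \<noteq> 0\<^sub>v n" "cmat (P_mat n h k) *\<^sub>v x = 0\<^sub>v n"
    using det_0_iff_vec_prod_zero[OF Pc] by auto
  have "qf (cmat (P_mat n h k)) x = 0" by (rule qf_zero[OF Pc x(1,3)])
  with P_qf0(2)[OF h rho x(1)] nsq_pos[OF x(1,2)] show False by simp
qed

lemma char_Lm:
  assumes h: "\<forall>i\<le>n. h i < h (Suc i)" and rho: "vnorm k > 0"
  shows "det (cmat (P_mat n h k)) * poly (char_poly (N_mat n h U k)) z = det (Lm n h U k z)"
proof -
  have d: "det (cmat (P_mat n h k)) \<noteq> 0" by (rule det_P_nz[OF h rho])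
  note Nc = N_props(1)[OF d, of U]
  have "poly (char_poly (N_mat n h U k)) z = det (- char_matrix (N_mat n h U k) z)"
    by (rule char_poly_matrix[OF Nc])
  also have "- char_matrix (N_mat n h U k) z = z \<cdot>\<^sub>m 1\<^sub>m (n+n) - N_mat n h U k"
    unfolding char_matrix_def using Nc by (intro eq_matI) auto
  finally have 1: "poly (char_poly (N_mat n h U k)) z = det (z \<cdot>\<^sub>m 1\<^sub>m (n+n) - N_mat n h U k)" .
  have "det (cmat (P_mat n h k)) * det (z \<cdot>\<^sub>m 1\<^sub>m (n+n) - N_mat n h U k)
      = det (N1_mat n h k * (z \<cdot>\<^sub>m 1\<^sub>m (n+n) - N_mat n h U k))"
    unfolding det_N1[symmetric] using N1_carrier Nc
    by (intro det_mult[symmetric, of _ "n+n"]) (auto intro!: minus_carrier_mat)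
  also have "\<dots> = det (z \<cdot>\<^sub>m N1_mat n h k - N2_mat n h U k)" using N_props(2)[OF d] by simp
  also have "\<dots> = det (Lm n h U k z)" by (rule det_zN, insert rho, simp)
  finally show ?thesis using 1 by simp
qed

lemma eig_Lm:
  assumes h: "\<forall>i\<le>n. h i < h (Suc i)" and rho: "vnorm k > 0"
  shows "eigenvalue (N_mat n h U k) z \<longleftrightarrow> det (Lm n h U k z) = 0"
proof -
  have d: "det (cmat (P_mat n h k)) \<noteq> 0" by (rule det_P_nz[OF h rho])
  note Nc = N_props(1)[OF d, of U]
  show ?thesis
    unfolding eigenvalue_root_char_poly[OF Nc] char_Lm[OF h rho, of U z, symmetric]
    using d by simp
qed



lemma qf_add: "A \<in> carrier_mat n n \<Longrightarrow> B \<in> carrier_mat n n \<Longrightarrow> x \<in> carrier_vec n \<Longrightarrow> qf (A + B) x = qf A x + qf B x"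
  unfolding qf_def by (auto simp: add_mult_distrib_mat_vec sum.distrib algebra_simps)

lemma qf_smult: "A \<in> carrier_mat n n \<Longrightarrow> x \<in> carrier_vec n \<Longrightarrow> qf (c \<cdot>\<^sub>m A) x = c * qf A x"
  unfolding qf_def by (auto simp: sum_distrib_left algebra_simps)

lemma qf_one: "x \<in> carrier_vec n \<Longrightarrow> qf (1\<^sub>m n) x = of_real (nsq x)"
proof -
  assume x: "x \<in> carrier_vec n"
  have "cnj (x$i) * x$i = of_real ((cmod (x$i))^2)" for i
    using complex_norm_square[of "x$i"] by (simp add: mult.commute)
  then show ?thesis unfolding qf_def nsq_def using x by simp
qed

lemma Lm_zeroU:
  assumes "\<forall>l\<le>n. k \<bullet> U l = 0"
  shows "Lm n h U k z = z^2 \<cdot>\<^sub>m cmat (P_mat n h k) + of_real (vnorm k ^ 4) \<cdot>\<^sub>m 1\<^sub>m n"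
  by (rule eq_matI, insert assms, auto simp: Lm_def ctri_def P_mat_def tri_mat_def field_simps)

lemma re_zero_of_sq:
  fixes z :: complex
  assumes "Im (z^2) = 0" "Re (z^2) < 0"
  shows "Re z = 0"
proof -
  have "Im (z^2) = 2 * Re z * Im z" "Re (z^2) = (Re z)^2 - (Im z)^2"
    by (simp_all add: power2_eq_square)
  with assms have "Re z * Im z = 0" "(Re z)^2 < (Im z)^2" by auto
  then show ?thesis by (metis mult_eq_0_iff power2_eq_square zero_less_mult_iff not_less_iff_gr_or_eq
       zero_le_square less_le_not_le)
qed

lemma stable:
  assumes h: "\<forall>i\<le>n. h i < h (Suc i)" and rho: "vnorm k > 0" and U0: "\<forall>l\<le>n. k \<bullet> U l = 0"
    and det: "det (Lm n h U k z) = 0"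
  shows "Re z = 0"
proof -
  have Lc: "Lm n h U k z \<in> carrier_mat n n" by simp
  obtain x where x: "x \<in> carrier_vec n" "x \<noteq> 0\<^sub>v n" "Lm n h U k z *\<^sub>v x = 0\<^sub>v n"
    using det det_0_iff_vec_prod_zero[OF Lc] by auto
  have Pc: "cmat (P_mat n h k) \<in> carrier_mat n n" using P_mat_carrier by simp
  have "0 = qf (Lm n h U k z) x" using qf_zero[OF Lc x(1,3)] by simp
  also have "\<dots> = z^2 * qf (cmat (P_mat n h k)) x + of_real (vnorm k ^ 4) * of_real (nsq x)"
    unfolding Lm_zeroU[OF U0] using Pc x(1)
    by (subst qf_add[of _ n], auto simp: qf_smult[of _ n] qf_one)
  finally have eq: "z^2 * qf (cmat (P_mat n h k)) x = - of_real (vnorm k ^ 4 * nsq x)" 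
    by (simp add: algebra_simps add_eq_0_iff)
  define q where "q = qf (cmat (P_mat n h k)) x"
  have qim: "Im q = 0" and qre: "Re q \<ge> nsq x" using P_qf0[OF h rho x(1)] unfolding q_def by auto
  have s: "nsq x > 0" by (rule nsq_pos[OF x(1,2)])
  have qr: "q = of_real (Re q)" using qim by (simp add: complex_eq_iff)
  have qpos: "Re q > 0" using qre s by linarith
  have "z^2 = - of_real (vnorm k ^ 4 * nsq x / Re q)"
    using eq qpos unfolding q_def[symmetric] by (subst (asm) qr) (simp add: field_simps)
  moreover have "vnorm k ^ 4 * nsq x / Re q > 0" using rho s qpos by simp
  ultimately show ?thesis by (intro re_zero_of_sq) auto
qed



lemma Lm_cnj_entry: "i < n \<Longrightarrow> j < n \<Longrightarrow> Lm n h U k (- cnj z) $$ (i,j) = cnj (Lm n h U k z $$ (i,j))"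
  unfolding Lm_def ctri_def by (auto simp: power2_eq_square algebra_simps)

lemma Lm_sym:
  assumes "det (Lm n h U k z) = 0"
  shows "det (Lm n h U k (- cnj z)) = 0"
proof -
  have Lc: "\<And>z. Lm n h U k z \<in> carrier_mat n n" by simp
  obtain x where x: "x \<in> carrier_vec n" "x \<noteq> 0\<^sub>v n" "Lm n h U k z *\<^sub>v x = 0\<^sub>v n"
    using assms det_0_iff_vec_prod_zero[OF Lc] by auto
  define y where "y = map_vec cnj x"
  have y: "y \<in> carrier_vec n" using x(1) unfolding y_def by simp
  have "y \<noteq> 0\<^sub>v n"
  proof
    assume "y = 0\<^sub>v n"
    then have "x = 0\<^sub>v n" using x(1) unfolding y_def
      by (intro eq_vecI) (auto dest!: arg_cong[of _ _ "\<lambda>v. v $ _"] simp: vec_eq_iff)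
    with x(2) show False by simp
  qed
  moreover have "Lm n h U k (- cnj z) *\<^sub>v y = 0\<^sub>v n"
  proof (rule eq_vecI)
    fix i assume i: "i < dim_vec (0\<^sub>v n :: complex vec)"
    then have i': "i < n" by simp
    have "(Lm n h U k z *\<^sub>v x) $ i = 0" using x(3) i' by simp
    then have "(\<Sum>j<n. Lm n h U k z $$ (i,j) * x $ j) = 0"
      using i' x(1) by (simp add: mult_mat_vec_def scalar_prod_def lessThan_atLeast0)
    then have "cnj (\<Sum>j<n. Lm n h U k z $$ (i,j) * x $ j) = 0" by simp
    then have "(\<Sum>j<n. Lm n h U k (- cnj z) $$ (i,j) * y $ j) = 0"
      using i' x(1) by (simp add: Lm_cnj_entry y_def)
    then show "(Lm n h U k (- cnj z) *\<^sub>v y) $ i = 0\<^sub>v n $ i"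
      using i' y by (simp add: mult_mat_vec_def scalar_prod_def lessThan_atLeast0)
  qed simp
  ultimately show ?thesis using det_0_iff_vec_prod_zero[OF Lc] y by auto
qed



lemma self_sprod_pos:
  fixes e :: "real vec"
  assumes e: "e \<in> carrier_vec m" "e \<noteq> 0\<^sub>v m"
  shows "e \<bullet> e > 0"
proof -
  obtain i where i: "i < m" "e $ i \<noteq> 0" using e by (metis eq_vecI carrier_vecD index_zero_vec)
  have "e \<bullet> e = (\<Sum>j<m. (e $ j)^2)" using e(1) unfolding scalar_prod_def
    by (simp add: power2_eq_square lessThan_atLeast0)
  also have "\<dots> \<ge> (e $ i)^2" using i by (intro member_le_sum) auto
  finally show ?thesis using i by (smt (verit) zero_less_power2)
qed

lemma vnorm_pos: "e \<in> carrier_vec m \<Longrightarrow> e \<noteq> 0\<^sub>v m \<Longrightarrow> vnorm e > 0"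
  unfolding vnorm_def using self_sprod_pos by simp

lemma vnorm_zero: "vnorm (0\<^sub>v m) = 0" unfolding vnorm_def by simp

lemma kfam:
  assumes e: "e \<in> carrier_vec m" and r: "vnorm e > 0" and rho: "\<rho> > 0"
  defines "k \<equiv> (\<rho> / vnorm e) \<cdot>\<^sub>v e"
  shows "k \<in> carrier_vec m" "vnorm k = \<rho>" "k \<noteq> 0\<^sub>v m"
    "\<And>w. w \<in> carrier_vec m \<Longrightarrow> k \<bullet> w = \<rho> / vnorm e * (e \<bullet> w)"
proof -
  show kc: "k \<in> carrier_vec m" unfolding k_def using e by simp
  show kw: "\<And>w. w \<in> carrier_vec m \<Longrightarrow> k \<bullet> w = \<rho> / vnorm e * (e \<bullet> w)"
    unfolding k_def using e by simp
  have ee: "e \<bullet> e = (vnorm e)^2" unfolding vnorm_def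
    using r unfolding vnorm_def by (simp add: real_sqrt_pow2_iff less_imp_le)
  have "k \<bullet> k = \<rho> / vnorm e * (e \<bullet> k)" using kw[OF kc] .
  also have "e \<bullet> k = \<rho> / vnorm e * (e \<bullet> e)" unfolding k_def using e by simp
  finally have "k \<bullet> k = \<rho>^2" using ee r by (simp add: power2_eq_square field_simps)
  then show vk: "vnorm k = \<rho>" unfolding vnorm_def using rho by simp
  show "k \<noteq> 0\<^sub>v m" using vk rho vnorm_zero[of m] by auto
qed

lemma g_lim: "d > 0 \<Longrightarrow> r > 0 \<Longrightarrow> ((\<lambda>\<rho>::real. (coth (\<rho> * d) - csch (\<rho> * d)) / \<rho> - \<rho>^2 / (r^2 - \<rho>^2)) \<longlongrightarrow> d / 2) (at_right 0)"
  unfolding coth_def csch_def cosh_field_def sinh_field_def by real_asymp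



lemma exists_eigvec:
  fixes A :: "complex mat"
  assumes A: "A \<in> carrier_mat n n" and n: "n > 0"
  shows "\<exists>p v. v \<in> carrier_vec n \<and> v \<noteq> 0\<^sub>v n \<and> A *\<^sub>v v = p \<cdot>\<^sub>v v"
proof -
  obtain as where cp: "char_poly A = (\<Prod>a\<leftarrow>as. [:- a, 1:])" and len: "length as = n"
    using char_poly_factorized[OF A] by auto
  then obtain a where a: "a \<in> set as" using n by (cases as) auto
  have "poly (char_poly A) a = 0" unfolding cp poly_prod_list
    using a by (induct as) auto
  then have "eigenvalue A a" using eigenvalue_root_char_poly[OF A] by simp
  then show ?thesis unfolding eigenvalue_def eigenvector_def using A by auto
qed

lemma smult_mat_vec: "dim_vec v = dim_col A \<Longrightarrow> (c \<cdot>\<^sub>m A) *\<^sub>v v = c \<cdot>\<^sub>v (A *\<^sub>v (v :: 'a :: comm_ring vec))"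
  by (intro eq_vecI) (auto simp: scalar_prod_def sum_distrib_left algebra_simps intro!: sum.cong)

lemma Lm_const:
  assumes "\<forall>l\<le>n. k \<bullet> U l = u"
  shows "Lm n h U k z = (z^2 + of_real (vnorm k ^ 4)) \<cdot>\<^sub>m 1\<^sub>m n + (z + \<i> * of_real u)^2 \<cdot>\<^sub>m (cmat (P_mat n h k) - 1\<^sub>m n)"
  by (rule eq_matI, insert assms, auto simp: Lm_def ctri_def P_mat_def tri_mat_def field_simps)

lemma unstable_const:
  assumes h: "\<forall>i\<le>n. h i < h (Suc i)" and n: "n \<ge> 1"
    and e: "e \<in> carrier_vec m" "e \<noteq> 0\<^sub>v m"
    and U: "\<forall>j\<le>n. U j \<in> carrier_vec m"
    and const: "\<forall>j\<le>n. e \<bullet> U j = (vnorm e)^2"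
  shows "\<exists>k\<in>carrier_vec m. k \<noteq> 0\<^sub>v m \<and> (\<exists>z. det (Lm n h U k z) = 0 \<and> Re z > 0)"
proof -
  define r where "r = vnorm e"
  have r: "r > 0" unfolding r_def by (rule vnorm_pos[OF e])
  have ev: "\<forall>\<^sub>F \<rho> in at_right 0. \<forall>l\<in>{..n}. (coth (\<rho> * dh h l) - csch (\<rho> * dh h l)) / \<rho> - \<rho>^2 / (r^2 - \<rho>^2) > 0"
  proof (rule eventually_ball_finite, simp, intro ballI)
    fix l assume "l \<in> {..n}"
    then have d: "dh h l > 0" using dh_pos[OF h] by simp
    show "\<forall>\<^sub>F \<rho> in at_right 0. (coth (\<rho> * dh h l) - csch (\<rho> * dh h l)) / \<rho> - \<rho>^2 / (r^2 - \<rho>^2) > 0"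
      using order_tendstoD(1)[OF g_lim[OF d r], of 0] d by simp
  qed
  moreover have "\<forall>\<^sub>F \<rho> in at_right 0. \<rho> > 0 \<and> \<rho> < r"
    using r by (auto simp: eventually_at_right_field intro: exI[of _ r])
  ultimately have "\<forall>\<^sub>F \<rho> in at_right 0. (\<rho> > 0 \<and> \<rho> < r) \<and> (\<forall>l\<in>{..n}. (coth (\<rho> * dh h l) - csch (\<rho> * dh h l)) / \<rho> - \<rho>^2 / (r^2 - \<rho>^2) > 0)"
    by (rule eventually_conj[rotated])
  note EV = this
  obtain \<rho> where rho: "\<rho> > 0" "\<rho> < r"
    and g: "\<And>l. l \<le> n \<Longrightarrow> (coth (\<rho> * dh h l) - csch (\<rho> * dh h l)) / \<rho> > \<rho>^2 / (r^2 - \<rho>^2)"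
    using eventually_happens'[OF trivial_limit_at_right_real EV] by fastforce
  define k where "k = (\<rho> / r) \<cdot>\<^sub>v e"
  have kf: "k \<in> carrier_vec m" "vnorm k = \<rho>" "k \<noteq> 0\<^sub>v m" "\<And>w. w \<in> carrier_vec m \<Longrightarrow> k \<bullet> w = \<rho> / r * (e \<bullet> w)"
    using kfam[OF e(1) r[unfolded r_def] rho(1)] unfolding k_def r_def by auto
  define c where "c = \<rho>^2 / (r^2 - \<rho>^2)"
  have c: "c > 0" unfolding c_def using rho by (simp add: power_strict_mono)
  have ku: "\<forall>l\<le>n. k \<bullet> U l = \<rho> * r"
    using kf(4) U const unfolding r_def[symmetric] using r by (simp add: power2_eq_square)
  have Pc: "cmat (P_mat n h k) \<in> carrier_mat n n" using P_mat_carrier by simp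
  obtain p x where x: "x \<in> carrier_vec n" "x \<noteq> 0\<^sub>v n" "cmat (P_mat n h k) *\<^sub>v x = p \<cdot>\<^sub>v x"
    using exists_eigvec[OF Pc] n by auto
  have rk: "vnorm k > 0" using kf rho by simp
  have cc: "\<And>l. l \<le> n \<Longrightarrow> (coth (vnorm k * dh h l) - csch (vnorm k * dh h l)) / vnorm k \<ge> c"
    using g kf(2) unfolding c_def by (simp add: less_imp_le)
  have qp: "qf (cmat (P_mat n h k)) x = p * of_real (nsq x)"
    unfolding qf_def nsq_def x(3) using x(1) complex_norm_square
    by (simp add: sum_distrib_left algebra_simps)
  have s: "nsq x > 0" by (rule nsq_pos[OF x(1,2)])
  have pim: "Im p = 0" using P_qf(1)[OF h rk x(1) cc] s unfolding qp by simp
  have pre: "Re p \<ge> 1 + 2 * c" using P_qf(2)[OF h rk x(1) cc] s unfolding qp by simp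
  define \<sigma> where "\<sigma> = Re p - 1"
  have sig: "\<sigma> \<ge> 2 * c" unfolding \<sigma>_def using pre by simp
  have p_eq: "p = of_real (1 + \<sigma>)" unfolding \<sigma>_def using pim by (simp add: complex_eq_iff)
  define D where "D = \<rho>^2 * (r^2 * \<sigma> - (1 + \<sigma>) * \<rho>^2)"
  have "\<sigma> * (r^2 - \<rho>^2) > \<rho>^2"
  proof -
    have rr: "r^2 - \<rho>^2 > 0" using rho by (simp add: power_strict_mono)
    have "\<sigma> * (r^2 - \<rho>^2) \<ge> 2 * c * (r^2 - \<rho>^2)" using sig rr by (simp add: mult_right_mono)
    also have "2 * c * (r^2 - \<rho>^2) = 2 * \<rho>^2" unfolding c_def using rr by simp
    finally have "2 * \<rho>^2 \<le> \<sigma> * (r^2 - \<rho>^2)" .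
    moreover have "\<rho>^2 > 0" using rho by simp
    ultimately show ?thesis by linarith
  qed
  then have "r^2 * \<sigma> - (1 + \<sigma>) * \<rho>^2 > 0" by (simp add: algebra_simps)
  then have Dpos: "D > 0" unfolding D_def using rho by simp
  define sq where "sq = sqrt D"
  have sq: "sq > 0" "sq^2 = D" unfolding sq_def using Dpos by simp_all
  have s1: "1 + \<sigma> > 0" using sig c by simp
  define t where "t = 1 + \<sigma>"
  define a where "a = sq / t"
  define b where "b = - (\<rho> * r * \<sigma>) / t"
  define z where "z = Complex a b"
  have rez: "Re z > 0" unfolding z_def a_def t_def using sq s1 by simp
  have tb: "t * b = - (\<rho> * r * \<sigma>)" unfolding b_def t_def using s1 by simp
  have ta: "t * a = sq" unfolding a_def t_def using s1 by simp
  have scal: "(z^2 + of_real (\<rho> ^ 4)) + (z + \<i> * of_real (\<rho> * r))^2 * (p - 1) = 0"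
  proof -
    have pm: "p - 1 = of_real \<sigma>" using p_eq by simp
    have im: "2 * a * b + 2 * a * (b + \<rho> * r) * \<sigma> = 0"
    proof -
      have "2 * a * b + 2 * a * (b + \<rho> * r) * \<sigma> = 2 * a * (t * b + \<rho> * r * \<sigma>)"
        unfolding t_def by (simp add: algebra_simps)
      then show ?thesis using tb by simp
    qed
    have re: "a^2 - b^2 + \<rho>^4 + (a^2 - (b + \<rho> * r)^2) * \<sigma> = 0"
    proof -
      have tbr: "t * b + t * \<rho> * r = \<rho> * r" using tb unfolding t_def by (simp add: algebra_simps)
      have "t^2 * (a^2 - b^2 + \<rho>^4 + (a^2 - (b + \<rho> * r)^2) * \<sigma>)
          = t * (t*a)^2 - (t*b)^2 - \<sigma> * (t*b + t*\<rho>*r)^2 + t^2 * \<rho>^4"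
        unfolding t_def by (simp add: algebra_simps power2_eq_square)
      also have "\<dots> = t * sq^2 - (\<rho> * r * \<sigma>)^2 - \<sigma> * (\<rho> * r)^2 + t^2 * \<rho>^4"
        by (subst tbr, subst ta, subst tb, simp add: power2_eq_square)
      also have "\<dots> = t * (sq^2 - D)"
        unfolding D_def t_def by (simp add: algebra_simps power2_eq_square power4_eq_xxxx)
      also have "\<dots> = 0" using sq(2) by simp
      finally show ?thesis using s1 unfolding t_def by simp
    qed
    show ?thesis unfolding pm z_def
      using re im by (simp add: complex_eq_iff power2_eq_square algebra_simps)
  qed
  have "Lm n h U k z *\<^sub>v x = 0\<^sub>v n"
  proof -
    have "Lm n h U k z = (z^2 + of_real (\<rho> ^ 4)) \<cdot>\<^sub>m 1\<^sub>m n + (z + \<i> * of_real (\<rho> * r))^2 \<cdot>\<^sub>m (cmat (P_mat n h k) - 1\<^sub>m n)"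
      using Lm_const[OF ku] kf(2) by simp
    also have "\<dots> *\<^sub>v x = (z^2 + of_real (\<rho> ^ 4)) \<cdot>\<^sub>v x + (z + \<i> * of_real (\<rho> * r))^2 \<cdot>\<^sub>v (p \<cdot>\<^sub>v x - x)"
    proof -
      have 1: "((z^2 + of_real (\<rho> ^ 4)) \<cdot>\<^sub>m 1\<^sub>m n + (z + \<i> * of_real (\<rho> * r))^2 \<cdot>\<^sub>m (cmat (P_mat n h k) - 1\<^sub>m n)) *\<^sub>v x
        = ((z^2 + of_real (\<rho> ^ 4)) \<cdot>\<^sub>m 1\<^sub>m n) *\<^sub>v x + ((z + \<i> * of_real (\<rho> * r))^2 \<cdot>\<^sub>m (cmat (P_mat n h k) - 1\<^sub>m n)) *\<^sub>v x"
        by (rule add_mult_distrib_mat_vec[of _ n n], insert x Pc, auto intro!: minus_carrier_mat)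
      have 2: "(cmat (P_mat n h k) - 1\<^sub>m n) *\<^sub>v x = p \<cdot>\<^sub>v x - x"
        using minus_mult_distrib_mat_vec[OF Pc one_carrier_mat x(1)] x by simp
      show ?thesis unfolding 1 using x Pc by (simp add: smult_mat_vec 2)
    qed
    also have "\<dots> = ((z^2 + of_real (\<rho> ^ 4)) + (z + \<i> * of_real (\<rho> * r))^2 * (p - 1)) \<cdot>\<^sub>v x"
      using x by (intro eq_vecI) (auto simp: algebra_simps)
    also have "\<dots> = 0\<^sub>v n" unfolding scal using x by (intro eq_vecI) auto
    finally show ?thesis .
  qed
  then have "det (Lm n h U k z) = 0"
    using det_0_iff_vec_prod_zero[OF Lm_carrier] x by blast
  then show ?thesis using kf rez by blast
qed



lemma det_tendsto:
  fixes M :: "'b \<Rightarrow> complex mat"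
  assumes M: "\<And>x. M x \<in> carrier_mat n n" and M0: "M0 \<in> carrier_mat n n"
    and lim: "\<And>i j. i < n \<Longrightarrow> j < n \<Longrightarrow> ((\<lambda>x. M x $$ (i,j)) \<longlongrightarrow> M0 $$ (i,j)) F"
  shows "((\<lambda>x. det (M x)) \<longlongrightarrow> det M0) F"
proof -
  have eq: "(\<lambda>x. det (M x)) = (\<lambda>x. \<Sum>p\<in>{p. p permutes {0..<n}}. signof p * (\<Prod>i = 0..<n. M x $$ (i, p i)))"
    using det_def'[OF M] by auto
  show ?thesis unfolding eq det_def'[OF M0]
  proof (intro tendsto_sum tendsto_mult tendsto_const tendsto_prod)
    fix p i assume p: "p \<in> {p. p permutes {0..<n}}" and i: "i \<in> {0..<n}"
    then have "p i < n" using permutes_in_image[of p "{0..<n}" i] by auto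
    then show "((\<lambda>x. M x $$ (i, p i)) \<longlongrightarrow> M0 $$ (i, p i)) F" using lim i by auto
  qed
qed

lemma poly_prod_lin_bound:
  assumes "\<forall>a\<in>set as. Re a = 0"
  shows "cmod (poly (\<Prod>a\<leftarrow>as. [:- a, 1:]) z) \<ge> \<bar>Re z\<bar> ^ length as"
  using assms
proof (induct as)
  case Nil then show ?case by simp
next
  case (Cons a as)
  have "\<bar>Re z\<bar> = \<bar>Re (z - a)\<bar>" using Cons.prems by simp
  also have "\<dots> \<le> cmod (z - a)" by (rule abs_Re_le_cmod)
  finally have 1: "\<bar>Re z\<bar> \<le> cmod (z - a)" .
  have 2: "\<bar>Re z\<bar> ^ length as \<le> cmod (poly (\<Prod>a\<leftarrow>as. [:- a, 1:]) z)" using Cons by simp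
  have "\<bar>Re z\<bar> ^ length (a # as) = \<bar>Re z\<bar> * \<bar>Re z\<bar> ^ length as" by simp
  also have "\<dots> \<le> cmod (z - a) * cmod (poly (\<Prod>a\<leftarrow>as. [:- a, 1:]) z)"
    by (rule mult_mono[OF 1 2], auto)
  also have "\<dots> = cmod (poly (\<Prod>a\<leftarrow>a # as. [:- a, 1:]) z)"
    by (simp add: norm_mult[symmetric] left_diff_distrib)
  finally show ?case .
qed

lemma crit:
  assumes h: "\<forall>i\<le>n. h i < h (Suc i)" and rho: "vnorm k > 0"
    and stab: "\<forall>w. det (Lm n h U k w) = 0 \<longrightarrow> Re w = 0"
  shows "cmod (det (Lm n h U k z)) \<ge> cmod (det (cmat (P_mat n h k))) * \<bar>Re z\<bar> ^ (2 * n)"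
proof -
  have d: "det (cmat (P_mat n h k)) \<noteq> 0" by (rule det_P_nz[OF h rho])
  note Nc = N_props(1)[OF d, of U]
  obtain as where cp: "char_poly (N_mat n h U k) = (\<Prod>a\<leftarrow>as. [:- a, 1:])" and len: "length as = n + n"
    using char_poly_factorized[OF Nc] by auto
  have "\<forall>a\<in>set as. Re a = 0"
  proof
    fix a assume a: "a \<in> set as"
    have "poly (char_poly (N_mat n h U k)) a = 0" unfolding cp poly_prod_list
      using a by (induct as) auto
    then have "det (Lm n h U k a) = 0" using char_Lm[OF h rho, of U a] by simp
    then show "Re a = 0" using stab by simp
  qed
  from poly_prod_lin_bound[OF this, of z]
  have "cmod (poly (char_poly (N_mat n h U k)) z) \<ge> \<bar>Re z\<bar> ^ (2 * n)" unfolding cp len by (simp add: mult_2)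
  then have "cmod (det (cmat (P_mat n h k))) * cmod (poly (char_poly (N_mat n h U k)) z)
    \<ge> cmod (det (cmat (P_mat n h k))) * \<bar>Re z\<bar> ^ (2 * n)" by (simp add: mult_left_mono)
  then show ?thesis unfolding char_Lm[OF h rho, of U z, symmetric] by (simp add: norm_mult)
qed



definition Kmat :: "nat \<Rightarrow> (nat \<Rightarrow> complex) \<Rightarrow> complex mat" where
  "Kmat n c = mat n n (\<lambda>(i,j). if i = j then c i + c (Suc i) else if j = Suc i then - c (Suc i)
     else if i = Suc j then - c (Suc j) else 0)"

lemma Kmat_carrier[simp]: "Kmat n c \<in> carrier_mat n n" unfolding Kmat_def by simp
lemma Kmat_dim[simp]: "dim_row (Kmat n c) = n" "dim_col (Kmat n c) = n" unfolding Kmat_def by simp_all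

definition Xe :: "nat \<Rightarrow> complex vec \<Rightarrow> nat \<Rightarrow> complex" where
  "Xe n x j = (if j < n then x $ j else 0)"

definition Ye :: "nat \<Rightarrow> complex vec \<Rightarrow> nat \<Rightarrow> complex" where
  "Ye n x j = Xe n x j - (if j = 0 then 0 else Xe n x (j - 1))"

lemma Kmat_mv:
  assumes x: "x \<in> carrier_vec n" and i: "i < n"
  shows "(Kmat n c *\<^sub>v x) $ i = c i * Ye n x i - c (Suc i) * Ye n x (Suc i)"
proof -
  have "(Kmat n c *\<^sub>v x) $ i = (\<Sum>j<n. Kmat n c $$ (i,j) * x $ j)"
    using x i by (simp add: mult_mat_vec_def scalar_prod_def lessThan_atLeast0 Kmat_def)
  also have "\<dots> = (\<Sum>j<n. (if j = i then (c i + c (Suc i)) * x $ i else 0)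
      + (if j = Suc i then - c (Suc i) * x $ (Suc i) else 0)
      + (if Suc j = i then - c i * x $ (i - 1) else 0))"
    by (rule sum.cong, simp, insert i, auto simp: Kmat_def)
  also have "\<dots> = (c i + c (Suc i)) * x $ i - c (Suc i) * Xe n x (Suc i)
      - c i * (if i = 0 then 0 else x $ (i - 1))"
  proof -
    have a: "(\<Sum>j<n. if j = i then (c i + c (Suc i)) * x $ i else 0) = (c i + c (Suc i)) * x $ i"
      using i by (subst sum.delta) auto
    have b: "(\<Sum>j<n. if j = Suc i then - c (Suc i) * x $ (Suc i) else 0) = - c (Suc i) * Xe n x (Suc i)"
      by (subst sum.delta) (auto simp: Xe_def)
    have cc: "(\<Sum>j<n. if Suc j = i then - c i * x $ (i - 1) else 0) = - c i * (if i = 0 then 0 else x $ (i - 1))"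
    proof (cases i)
      case 0 then show ?thesis by simp
    next
      case (Suc i')
      have "(\<Sum>j<n. if Suc j = i then - c i * x $ (i - 1) else 0) = (\<Sum>j<n. if j = i' then - c i * x $ (i - 1) else 0)"
        using Suc by (intro sum.cong) auto
      also have "\<dots> = - c i * x $ (i - 1)" using Suc i by (subst sum.delta) auto
      finally show ?thesis using Suc by simp
    qed
    show ?thesis unfolding sum.distrib a b cc by simp
  qed
  also have "\<dots> = c i * Ye n x i - c (Suc i) * Ye n x (Suc i)"
    using i by (simp add: Ye_def Xe_def algebra_simps)
  finally show ?thesis .
qed

lemma Xe_sum: "m \<le> n \<Longrightarrow> Xe n x m = (\<Sum>i\<le>m. Ye n x i)"
proof (induct m)
  case 0 then show ?case by (simp add: Ye_def)
next
  case (Suc m)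
  then show ?case by (simp add: Ye_def)
qed

lemma K_kernel:
  assumes n: "n \<ge> 1" and c: "\<And>j. j \<le> n \<Longrightarrow> c j \<noteq> 0" and s: "(\<Sum>j\<le>n. 1 / c j) = 0"
  defines "x \<equiv> vec n (\<lambda>i. \<Sum>j\<le>i. 1 / c j)"
  shows "x \<in> carrier_vec n" "x \<noteq> 0\<^sub>v n" "Kmat n c *\<^sub>v x = 0\<^sub>v n"
proof -
  show xc: "x \<in> carrier_vec n" unfolding x_def by simp
  have "x $ 0 = 1 / c 0" unfolding x_def using n by simp
  then have "x $ 0 \<noteq> 0" using c[of 0] by simp
  then show "x \<noteq> 0\<^sub>v n" using n by auto
  have y: "c i * Ye n x i = 1" if i: "i \<le> n" for i
  proof (cases "i < n")
    case True
    then have "Ye n x i = 1 / c i"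
    proof (cases i)
      case 0 then show ?thesis using True unfolding Ye_def Xe_def x_def by simp
    next
      case (Suc i')
      then show ?thesis using True unfolding Ye_def Xe_def x_def by simp
    qed
    then show ?thesis using c[OF i] by simp
  next
    case False
    then have ii: "i = n" using i by simp
    obtain n' where n': "n = Suc n'" using n by (cases n) auto
    have "Ye n x n = - (\<Sum>j\<le>n'. 1 / c j)" unfolding Ye_def Xe_def x_def using n' by simp
    also have "\<dots> = 1 / c n" using s unfolding n' by (simp add: add_eq_0_iff)
    finally show ?thesis using c[of n] ii by simp
  qed
  show "Kmat n c *\<^sub>v x = 0\<^sub>v n"
  proof (rule eq_vecI)
    fix i assume "i < dim_vec (0\<^sub>v n :: complex vec)"
    then have i: "i < n" by simp
    show "(Kmat n c *\<^sub>v x) $ i = 0\<^sub>v n $ i"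
      unfolding Kmat_mv[OF xc i] using y[of i] y[of "Suc i"] i by simp
  qed simp
qed

lemma K_inj:
  assumes c: "\<And>j. j \<le> n \<Longrightarrow> c j \<noteq> 0" and s: "(\<Sum>j\<le>n. 1 / c j) \<noteq> 0"
    and x: "x \<in> carrier_vec n" and K: "Kmat n c *\<^sub>v x = 0\<^sub>v n"
  shows "x = 0\<^sub>v n"
proof -
  have step: "c i * Ye n x i = c (Suc i) * Ye n x (Suc i)" if "i < n" for i
  proof -
    have "(Kmat n c *\<^sub>v x) $ i = 0" using K that by simp
    then show ?thesis unfolding Kmat_mv[OF x that] by simp
  qed
  define J where "J = c 0 * Ye n x 0"
  have cy: "c i * Ye n x i = J" if "i \<le> n" for i
    using that
  proof (induct i)
    case 0 then show ?case unfolding J_def by simp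
  next
    case (Suc i) then show ?case using step[of i] by simp
  qed
  have y: "Ye n x i = J / c i" if "i \<le> n" for i
    using cy[OF that] c[OF that] by (simp add: field_simps)
  have "0 = Xe n x n" unfolding Xe_def by simp
  also have "\<dots> = (\<Sum>i\<le>n. J / c i)" using Xe_sum[of n n x] y by simp
  also have "\<dots> = J * (\<Sum>i\<le>n. 1 / c i)" by (simp add: sum_distrib_left)
  finally have "J = 0" using s by simp
  then have y0: "Ye n x i = 0" if "i \<le> n" for i using y[OF that] by simp
  show ?thesis
  proof (rule eq_vecI)
    fix i assume "i < dim_vec (0\<^sub>v n :: complex vec)"
    then have i: "i < n" by simp
    have "Xe n x i = 0" using Xe_sum[of i n x] y0 i by simp
    then show "x $ i = 0\<^sub>v n $ i" using i unfolding Xe_def by simp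
  qed (insert x, simp)
qed

lemma K_det:
  assumes c: "\<And>j. j \<le> n \<Longrightarrow> c j \<noteq> 0" and s: "(\<Sum>j\<le>n. 1 / c j) \<noteq> 0"
  shows "det (Kmat n c) \<noteq> 0"
  using K_inj[OF c s] det_0_iff_vec_prod_zero[OF Kmat_carrier] by blast



lemma prod_ge_member:
  fixes f :: "'a \<Rightarrow> real"
  assumes "finite S" "a \<in> S" "\<And>x. x \<in> S \<Longrightarrow> f x \<ge> 1"
  shows "(\<Prod>x\<in>S. f x) \<ge> f a"
proof -
  have "(\<Prod>x\<in>S. f x) = f a * (\<Prod>x\<in>S - {a}. f x)" using assms by (simp add: prod.remove)
  moreover have "(\<Prod>x\<in>S - {a}. f x) \<ge> 1" using assms by (intro prod_ge_1) auto
  moreover have "f a \<ge> 0" using assms(3)[OF assms(2)] by simp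
  ultimately show ?thesis by (metis mult_left_mono mult.right_neutral)
qed

lemma root_exists:
  fixes v d :: "nat \<Rightarrow> real"
  assumes d: "\<And>j. j \<le> n \<Longrightarrow> d j > 0" and j0: "j0 \<le> n" and i0: "i0 \<le> n" and ne: "v j0 \<noteq> v i0"
  shows "\<exists>\<nu>. Im \<nu> \<noteq> 0 \<and> (\<Sum>j\<le>n. of_real (d j) / (\<nu> + of_real (v j))^2) = 0"
proof -
  define W where "W = v ` {..n}"
  have fW: "finite W" unfolding W_def by simp
  define D where "D w = (\<Sum>j\<in>{j\<in>{..n}. v j = w}. d j)" for w
  have Dpos: "D w > 0" if wW: "w \<in> W" for w
  proof -
    obtain j where j: "j \<le> n" "v j = w" using wW unfolding W_def by auto
    have "D w \<ge> d j" unfolding D_def using j d by (intro member_le_sum) (auto intro: less_imp_le)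
    then show ?thesis using d[OF j(1)] by simp
  qed
  define Gr where "Gr y = (\<Sum>w\<in>W. D w * (\<Prod>w'\<in>W - {w}. (y + w')^2))" for y
  define G :: "complex poly" where "G = (\<Sum>w\<in>W. [:of_real (D w):] * (\<Prod>w'\<in>W - {w}. [:of_real w', 1:]^2))"
  have polyG: "poly G z = (\<Sum>w\<in>W. of_real (D w) * (\<Prod>w'\<in>W - {w}. (z + of_real w')^2))" for z
    unfolding G_def by (simp add: poly_sum poly_prod algebra_simps)
  have polyG_real: "poly G (of_real y) = of_real (Gr y)" for y
    unfolding polyG Gr_def by simp
  have w1: "v i0 \<in> W" and w2: "v j0 \<in> W" using i0 j0 unfolding W_def by auto
  have Grpos: "Gr y > 0" for y
  proof -
    obtain ws where ws: "ws \<in> W" "\<And>w'. w' \<in> W - {ws} \<Longrightarrow> y + w' \<noteq> 0"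
    proof (cases "- y \<in> W")
      case True then show ?thesis by (intro that[of "- y"]) auto
    next
      case False then show ?thesis using w1 by (intro that[of "v i0"]) (auto simp: add_eq_0_iff)
    qed
    have nonneg: "D w * (\<Prod>w'\<in>W - {w}. (y + w')^2) \<ge> 0" if "w \<in> W" for w
      using Dpos[OF that] by (intro mult_nonneg_nonneg prod_nonneg) auto
    have "D ws * (\<Prod>w'\<in>W - {ws}. (y + w')^2) > 0"
      using Dpos[OF ws(1)] ws(2) fW by (intro mult_pos_pos prod_pos) auto
    also have "\<dots> \<le> Gr y" unfolding Gr_def using ws(1) fW nonneg
      by (intro member_le_sum) auto
    finally show ?thesis .
  qed
  have nc: "\<not> constant (poly G)"
  proof
    assume c: "constant (poly G)"
    then have eq: "Gr y = Gr 0" for y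
    proof -
      have "poly G (of_real y) = poly G (of_real 0)" using c unfolding constant_def by blast
      then show ?thesis unfolding polyG_real of_real_eq_iff .
    qed
    define S where "S = (\<Sum>w\<in>W. \<bar>w\<bar>)"
    define y where "y = S + Gr 0 / D (v i0) + 1"
    have Gr0: "Gr 0 > 0" by (rule Grpos)
    have Dw1: "D (v i0) > 0" by (rule Dpos[OF w1])
    have absle: "\<bar>w\<bar> \<le> S" if "w \<in> W" for w unfolding S_def using that fW by (intro member_le_sum) auto
    have ge1: "y + w' \<ge> 1" if "w' \<in> W" for w'
      using absle[OF that] Gr0 Dw1 unfolding y_def by (smt (verit) divide_pos_pos)
    have "Gr y \<ge> D (v i0) * (\<Prod>w'\<in>W - {v i0}. (y + w')^2)" unfolding Gr_def
      using w1 fW Dpos by (intro member_le_sum mult_nonneg_nonneg prod_nonneg) (auto intro: less_imp_le)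
    also have "(\<Prod>w'\<in>W - {v i0}. (y + w')^2) \<ge> (y + v j0)^2"
      using fW w2 ne ge1 by (intro prod_ge_member) (auto simp: one_le_power)
    then have "D (v i0) * (\<Prod>w'\<in>W - {v i0}. (y + w')^2) \<ge> D (v i0) * (y + v j0)^2"
      using Dw1 by simp
    also have "(y + v j0)^2 \<ge> y + v j0" using ge1[OF w2] by (simp add: power2_eq_square)
    then have "D (v i0) * (y + v j0)^2 \<ge> D (v i0) * (y + v j0)" using Dw1 by simp
    also have "y + v j0 \<ge> Gr 0 / D (v i0) + 1" using absle[OF w2] unfolding y_def by linarith
    then have "D (v i0) * (y + v j0) \<ge> D (v i0) * (Gr 0 / D (v i0) + 1)" using Dw1 by simp
    also have "D (v i0) * (Gr 0 / D (v i0) + 1) = Gr 0 + D (v i0)" using Dw1 by (simp add: field_simps)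
    finally have "Gr y \<ge> Gr 0 + D (v i0)" by simp
    then show False using eq[of y] Dw1 by simp
  qed
  obtain \<nu> where root: "poly G \<nu> = 0" using fundamental_theorem_of_algebra[OF nc] by blast
  have im: "Im \<nu> \<noteq> 0"
  proof
    assume "Im \<nu> = 0"
    then have "\<nu> = of_real (Re \<nu>)" by (simp add: complex_eq_iff)
    then have "poly G \<nu> = of_real (Gr (Re \<nu>))" using polyG_real by metis
    then show False using root Grpos[of "Re \<nu>"] by simp
  qed
  have nz: "\<nu> + of_real w \<noteq> 0" for w
  proof
    assume "\<nu> + of_real w = 0"
    then have "Im (\<nu> + of_real w) = 0" by simp
    then show False using im by simp
  qed
  have "(\<Sum>j\<le>n. of_real (d j) / (\<nu> + of_real (v j))^2)
      = (\<Sum>w\<in>W. \<Sum>j\<in>{j\<in>{..n}. v j = w}. of_real (d j) / (\<nu> + of_real (v j))^2)"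
    unfolding W_def by (rule sum.image_gen) simp
  also have "\<dots> = (\<Sum>w\<in>W. of_real (D w) / (\<nu> + of_real w)^2)"
    unfolding D_def by (auto simp: sum_divide_distrib intro!: sum.cong)
  finally have s1: "(\<Sum>j\<le>n. of_real (d j) / (\<nu> + of_real (v j))^2) = (\<Sum>w\<in>W. of_real (D w) / (\<nu> + of_real w)^2)" .
  have "(\<Sum>w\<in>W. of_real (D w) / (\<nu> + of_real w)^2) * (\<Prod>w'\<in>W. (\<nu> + of_real w')^2)
      = (\<Sum>w\<in>W. of_real (D w) * (\<Prod>w'\<in>W - {w}. (\<nu> + of_real w')^2))"
    unfolding sum_distrib_right
  proof (rule sum.cong[OF refl])
    fix w assume w: "w \<in> W"
    have "(\<Prod>w'\<in>W. (\<nu> + of_real w')^2) = (\<nu> + of_real w)^2 * (\<Prod>w'\<in>W - {w}. (\<nu> + of_real w')^2)"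
      using w fW by (simp add: prod.remove)
    then show "of_real (D w) / (\<nu> + of_real w)^2 * (\<Prod>w'\<in>W. (\<nu> + of_real w')^2)
       = of_real (D w) * (\<Prod>w'\<in>W - {w}. (\<nu> + of_real w')^2)" using nz[of w] by simp
  qed
  also have "\<dots> = 0" using root polyG by simp
  finally have "(\<Sum>w\<in>W. of_real (D w) / (\<nu> + of_real w)^2) = 0"
    using nz fW by (simp add: prod_zero_iff)
  then show ?thesis using im s1 by auto
qed



lemma lim_coth: "d > 0 \<Longrightarrow> ((\<lambda>x::real. x * coth (x * d)) \<longlongrightarrow> inverse d) (at_right 0)"
  unfolding coth_def cosh_field_def sinh_field_def by real_asymp

lemma lim_csch: "d > 0 \<Longrightarrow> ((\<lambda>x::real. x * csch (x * d)) \<longlongrightarrow> inverse d) (at_right 0)"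
  unfolding csch_def sinh_field_def by real_asymp

lemma clim_coth: "d > 0 \<Longrightarrow> ((\<lambda>x::real. complex_of_real (x * coth (x * d))) \<longlongrightarrow> of_real (inverse d)) (at_right 0)"
  by (rule tendsto_of_real[OF lim_coth])

lemma clim_csch: "d > 0 \<Longrightarrow> ((\<lambda>x::real. complex_of_real (x * csch (x * d))) \<longlongrightarrow> of_real (inverse d)) (at_right 0)"
  by (rule tendsto_of_real[OF lim_csch])

lemma Lm_entry_k:
  assumes rho: "vnorm k = \<rho>" "\<rho> > 0" and ku: "\<And>l. l \<le> n \<Longrightarrow> k \<bullet> U l = \<rho> * v l"
    and i: "i < n" and j: "j < n"
  shows "Lm n h U k (\<i> * of_real \<rho> * \<nu>) $$ (i,j) =
    (if i = j then - of_real (\<rho>^2) * \<nu>^2 + of_real (\<rho>^4)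
        - (\<nu> + of_real (v i))^2 * of_real (\<rho> * coth (\<rho> * dh h i))
        - (\<nu> + of_real (v (Suc i)))^2 * of_real (\<rho> * coth (\<rho> * dh h (Suc i)))
     else if j = Suc i then (\<nu> + of_real (v (Suc i)))^2 * of_real (\<rho> * csch (\<rho> * dh h (Suc i)))
     else if i = Suc j then (\<nu> + of_real (v (Suc j)))^2 * of_real (\<rho> * csch (\<rho> * dh h (Suc j)))
     else 0)"
proof -
  have k1: "k \<bullet> U i = \<rho> * v i" "k \<bullet> U (Suc i) = \<rho> * v (Suc i)" "k \<bullet> U (Suc j) = \<rho> * v (Suc j)"
    using ku i j by auto
  show ?thesis
    unfolding Lm_def ctri_def using i j rho k1
    by (auto simp: field_simps power2_eq_square power4_eq_xxxx)
qed

lemma P_entry_k: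
  assumes rho: "vnorm k = \<rho>" "\<rho> > 0" and i: "i < n" and j: "j < n"
  shows "(of_real (\<rho>^2) \<cdot>\<^sub>m cmat (P_mat n h k)) $$ (i,j) =
    (if i = j then of_real (\<rho>^2) + of_real (\<rho> * coth (\<rho> * dh h i)) + of_real (\<rho> * coth (\<rho> * dh h (Suc i)))
     else if j = Suc i then - of_real (\<rho> * csch (\<rho> * dh h (Suc i)))
     else if i = Suc j then - of_real (\<rho> * csch (\<rho> * dh h (Suc j)))
     else 0)"
  using i j rho P_mat_carrier[of n h k]
  by (auto simp: P_mat_entry field_simps power2_eq_square)



lemma Lm_lim:
  assumes h: "\<forall>i\<le>n. h i < h (Suc i)"
    and kk: "\<And>\<rho>. \<rho> > 0 \<Longrightarrow> vnorm (kk \<rho>) = \<rho>"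
    and ku: "\<And>\<rho> l. \<rho> > 0 \<Longrightarrow> l \<le> n \<Longrightarrow> kk \<rho> \<bullet> U l = \<rho> * v l"
    and i: "i < n" and j: "j < n"
  shows "((\<lambda>\<rho>. Lm n h U (kk \<rho>) (\<i> * of_real \<rho> * \<nu>) $$ (i,j)) \<longlongrightarrow>
          (- Kmat n (\<lambda>l. (\<nu> + of_real (v l))^2 / of_real (dh h l))) $$ (i,j)) (at_right 0)"
proof -
  let ?c = "\<lambda>l. (\<nu> + of_real (v l))^2 / of_real (dh h l)"
  define E where "E \<rho> = (if i = j then - of_real (\<rho>^2) * \<nu>^2 + of_real (\<rho>^4)
        - (\<nu> + of_real (v i))^2 * of_real (\<rho> * coth (\<rho> * dh h i))
        - (\<nu> + of_real (v (Suc i)))^2 * of_real (\<rho> * coth (\<rho> * dh h (Suc i)))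
     else if j = Suc i then (\<nu> + of_real (v (Suc i)))^2 * of_real (\<rho> * csch (\<rho> * dh h (Suc i)))
     else if i = Suc j then (\<nu> + of_real (v (Suc j)))^2 * of_real (\<rho> * csch (\<rho> * dh h (Suc j)))
     else 0)" for \<rho>
  have eq: "E \<rho> = Lm n h U (kk \<rho>) (\<i> * of_real \<rho> * \<nu>) $$ (i,j)" if "\<rho> > 0" for \<rho>
    using Lm_entry_k[OF kk[OF that] that ku[OF that] i j] unfolding E_def by simp
  have ev: "\<forall>\<^sub>F \<rho> in at_right 0. E \<rho> = Lm n h U (kk \<rho>) (\<i> * of_real \<rho> * \<nu>) $$ (i,j)"
    unfolding eventually_at_right_field using eq by (intro exI[of _ 1]) auto
  have d: "dh h l > 0" if "l \<le> n" for l using dh_pos[OF h that] .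
  have "(E \<longlongrightarrow> (- Kmat n ?c) $$ (i,j)) (at_right 0)"
  proof (cases "i = j")
    case True
    have "(E \<longlongrightarrow> - of_real (0^2) * \<nu>^2 + of_real (0^4) - (\<nu> + of_real (v i))^2 * of_real (inverse (dh h i))
        - (\<nu> + of_real (v (Suc i)))^2 * of_real (inverse (dh h (Suc i)))) (at_right 0)"
      unfolding E_def using True d i
      by (simp only: if_True if_False simp_thms) (intro tendsto_intros clim_coth, auto)
    then show ?thesis using True i unfolding Kmat_def by (simp add: divide_inverse)
  next
    case F1: False
    show ?thesis
    proof (cases "j = Suc i")
      case True
      have Ee: "E = (\<lambda>\<rho>. (\<nu> + of_real (v (Suc i)))^2 * of_real (\<rho> * csch (\<rho> * dh h (Suc i))))"
        unfolding E_def using True F1 by (intro ext) simp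
      have "(E \<longlongrightarrow> (\<nu> + of_real (v (Suc i)))^2 * of_real (inverse (dh h (Suc i)))) (at_right 0)"
        unfolding Ee using d j True by (intro tendsto_intros clim_csch) auto
      then show ?thesis using True F1 i j unfolding Kmat_def by (simp add: divide_inverse)
    next
      case F2: False
      show ?thesis
      proof (cases "i = Suc j")
        case True
        have Ee: "E = (\<lambda>\<rho>. (\<nu> + of_real (v (Suc j)))^2 * of_real (\<rho> * csch (\<rho> * dh h (Suc j))))"
          unfolding E_def using True F1 F2 by (intro ext) simp
        have "(E \<longlongrightarrow> (\<nu> + of_real (v (Suc j)))^2 * of_real (inverse (dh h (Suc j)))) (at_right 0)"
          unfolding Ee using d i True by (intro tendsto_intros clim_csch) auto
        then show ?thesis using True F1 F2 i j unfolding Kmat_def by (simp add: divide_inverse)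
      next
        case False
        then show ?thesis using F1 F2 i j unfolding E_def Kmat_def by simp
      qed
    qed
  qed
  then show ?thesis using tendsto_cong[OF ev] by blast
qed

lemma P_lim:
  assumes h: "\<forall>i\<le>n. h i < h (Suc i)"
    and kk: "\<And>\<rho>. \<rho> > 0 \<Longrightarrow> vnorm (kk \<rho>) = \<rho>"
    and i: "i < n" and j: "j < n"
  shows "((\<lambda>\<rho>. (of_real (\<rho>^2) \<cdot>\<^sub>m cmat (P_mat n h (kk \<rho>))) $$ (i,j)) \<longlongrightarrow>
          Kmat n (\<lambda>l. 1 / of_real (dh h l)) $$ (i,j)) (at_right 0)"
proof -
  define E where "E \<rho> = (if i = j then of_real (\<rho>^2) + of_real (\<rho> * coth (\<rho> * dh h i)) + of_real (\<rho> * coth (\<rho> * dh h (Suc i)))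
     else if j = Suc i then - of_real (\<rho> * csch (\<rho> * dh h (Suc i)))
     else if i = Suc j then - of_real (\<rho> * csch (\<rho> * dh h (Suc j)))
     else (0::complex))" for \<rho>
  have eq: "E \<rho> = (of_real (\<rho>^2) \<cdot>\<^sub>m cmat (P_mat n h (kk \<rho>))) $$ (i,j)" if "\<rho> > 0" for \<rho>
    using P_entry_k[OF kk[OF that] that i j] unfolding E_def by simp
  have ev: "\<forall>\<^sub>F \<rho> in at_right 0. E \<rho> = (of_real (\<rho>^2) \<cdot>\<^sub>m cmat (P_mat n h (kk \<rho>))) $$ (i,j)"
    unfolding eventually_at_right_field using eq by (intro exI[of _ 1]) auto
  have d: "dh h l > 0" if "l \<le> n" for l using dh_pos[OF h that] .
  have "(E \<longlongrightarrow> Kmat n (\<lambda>l. 1 / of_real (dh h l)) $$ (i,j)) (at_right 0)"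
  proof (cases "i = j")
    case True
    have "(E \<longlongrightarrow> of_real (0^2) + of_real (inverse (dh h i)) + of_real (inverse (dh h (Suc i)))) (at_right 0)"
      unfolding E_def using True d i
      by (simp only: if_True if_False simp_thms) (intro tendsto_intros clim_coth, auto)
    then show ?thesis using True i unfolding Kmat_def by (simp add: divide_inverse)
  next
    case F1: False
    show ?thesis
    proof (cases "j = Suc i")
      case True
      have Ee: "E = (\<lambda>\<rho>. - of_real (\<rho> * csch (\<rho> * dh h (Suc i))))"
        unfolding E_def using True F1 by (intro ext) simp
      have "(E \<longlongrightarrow> - of_real (inverse (dh h (Suc i)))) (at_right 0)"
        unfolding Ee using d j True by (intro tendsto_intros clim_csch) auto
      then show ?thesis using True F1 i j unfolding Kmat_def by (simp add: divide_inverse)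
    next
      case F2: False
      show ?thesis
      proof (cases "i = Suc j")
        case True
        have Ee: "E = (\<lambda>\<rho>. - of_real (\<rho> * csch (\<rho> * dh h (Suc j))))"
          unfolding E_def using True F1 F2 by (intro ext) simp
        have "(E \<longlongrightarrow> - of_real (inverse (dh h (Suc j)))) (at_right 0)"
          unfolding Ee using d i True by (intro tendsto_intros clim_csch) auto
        then show ?thesis using True F1 F2 i j unfolding Kmat_def by (simp add: divide_inverse)
      next
        case False
        then show ?thesis using F1 F2 i j unfolding E_def Kmat_def by simp
      qed
    qed
  qed
  then show ?thesis using tendsto_cong[OF ev] by blast
qed



lemma unstable_var:
  assumes h: "\<forall>i\<le>n. h i < h (Suc i)" and n: "n \<ge> 1"
    and e: "e \<in> carrier_vec m" "e \<noteq> 0\<^sub>v m"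
    and U: "\<forall>j\<le>n. U j \<in> carrier_vec m"
    and i0: "i0 \<le> n" and j0: "j0 \<le> n"
    and ne: "e \<bullet> U j0 / vnorm e \<noteq> e \<bullet> U i0 / vnorm e"
  shows "\<exists>k\<in>carrier_vec m. k \<noteq> 0\<^sub>v m \<and> (\<exists>z. det (Lm n h U k z) = 0 \<and> Re z \<noteq> 0)"
proof (rule ccontr)
  assume contra: "\<not> ?thesis"
  define r where "r = vnorm e"
  have r: "r > 0" unfolding r_def by (rule vnorm_pos[OF e])
  define v where "v j = e \<bullet> U j / r" for j
  define kk where "kk \<rho> = (\<rho> / r) \<cdot>\<^sub>v e" for \<rho>
  have kf: "kk \<rho> \<in> carrier_vec m" "vnorm (kk \<rho>) = \<rho>" "kk \<rho> \<noteq> 0\<^sub>v m"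
      "\<And>w. w \<in> carrier_vec m \<Longrightarrow> kk \<rho> \<bullet> w = \<rho> / r * (e \<bullet> w)" if "\<rho> > 0" for \<rho>
    using kfam[OF e(1) r[unfolded r_def] that] unfolding kk_def r_def by auto
  have ku: "kk \<rho> \<bullet> U l = \<rho> * v l" if "\<rho> > 0" "l \<le> n" for \<rho> l
    using kf(4)[OF that(1)] U that(2) unfolding v_def by simp
  have stab: "\<forall>w. det (Lm n h U (kk \<rho>) w) = 0 \<longrightarrow> Re w = 0" if "\<rho> > 0" for \<rho>
    using contra kf[OF that] by blast
  have dpos: "\<And>j. j \<le> n \<Longrightarrow> dh h j > 0" using dh_pos[OF h] by blast
  obtain \<nu> where im: "Im \<nu> \<noteq> 0" and root: "(\<Sum>j\<le>n. of_real (dh h j) / (\<nu> + of_real (v j))^2) = 0"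
    using root_exists[of n "dh h" j0 i0 v, OF dpos j0 i0] ne unfolding v_def r_def by auto
  define c where "c l = (\<nu> + of_real (v l))^2 / of_real (dh h l)" for l
  have nz: "\<nu> + of_real w \<noteq> 0" for w
  proof
    assume "\<nu> + of_real w = 0"
    then have "Im (\<nu> + of_real w) = 0" by simp
    then show False using im by simp
  qed
  have cnz: "c l \<noteq> 0" if "l \<le> n" for l unfolding c_def using nz dpos[OF that] by simp
  have "(\<Sum>j\<le>n. 1 / c j) = (\<Sum>j\<le>n. of_real (dh h j) / (\<nu> + of_real (v j))^2)"
    unfolding c_def by simp
  then have s0: "(\<Sum>j\<le>n. 1 / c j) = 0" using root by simp
  obtain x where x: "x \<in> carrier_vec n" "x \<noteq> 0\<^sub>v n" "Kmat n c *\<^sub>v x = 0\<^sub>v n"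
    using K_kernel[OF n cnz s0] by blast
  have "(- Kmat n c) *\<^sub>v x = 0\<^sub>v n" using x(1,3) by simp
  then have detK: "det (- Kmat n c) = 0"
    using det_0_iff_vec_prod_zero[of "- Kmat n c" n] x by auto
  define c' where "c' l = 1 / complex_of_real (dh h l)" for l
  have c'nz: "c' l \<noteq> 0" if "l \<le> n" for l unfolding c'_def using dpos[OF that] by simp
  have "(\<Sum>j\<le>n. 1 / c' j) = of_real (\<Sum>j\<le>n. dh h j)" unfolding c'_def by simp
  moreover have "(\<Sum>j\<le>n. dh h j) > 0" using dpos by (intro sum_pos) auto
  ultimately have "(\<Sum>j\<le>n. 1 / c' j) \<noteq> 0" by (metis of_real_eq_0_iff order_less_irrefl)
  from K_det[OF c'nz this] have detT: "det (Kmat n c') \<noteq> 0" .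
  define f where "f \<rho> = cmod (det (Lm n h U (kk \<rho>) (\<i> * of_real \<rho> * \<nu>)))" for \<rho>
  define g where "g \<rho> = cmod (det (of_real (\<rho>^2) \<cdot>\<^sub>m cmat (P_mat n h (kk \<rho>)))) * \<bar>Im \<nu>\<bar> ^ (2 * n)" for \<rho>
  have flim: "(f \<longlongrightarrow> cmod (det (- Kmat n c))) (at_right 0)"
    unfolding f_def
  proof (intro tendsto_norm det_tendsto[of _ n])
    fix i j assume ij: "i < n" "j < n"
    show "((\<lambda>\<rho>. Lm n h U (kk \<rho>) (\<i> * of_real \<rho> * \<nu>) $$ (i,j)) \<longlongrightarrow> (- Kmat n c) $$ (i,j)) (at_right 0)"
      unfolding c_def by (rule Lm_lim[OF h kf(2) ku ij])
  qed auto
  have glim: "(g \<longlongrightarrow> cmod (det (Kmat n c')) * \<bar>Im \<nu>\<bar> ^ (2 * n)) (at_right 0)"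
    unfolding g_def
  proof (intro tendsto_mult tendsto_const tendsto_norm det_tendsto[of _ n])
    fix i j assume ij: "i < n" "j < n"
    show "((\<lambda>\<rho>. (of_real (\<rho>^2) \<cdot>\<^sub>m cmat (P_mat n h (kk \<rho>))) $$ (i,j)) \<longlongrightarrow> Kmat n c' $$ (i,j)) (at_right 0)"
      unfolding c'_def by (rule P_lim[OF h kf(2) ij])
  qed (auto intro: P_mat_carrier)
  have ev: "\<forall>\<^sub>F \<rho> in at_right 0. g \<rho> \<le> f \<rho>"
    unfolding eventually_at_right_field
  proof (intro exI[of _ 1] conjI allI impI)
    fix \<rho> :: real assume rho: "\<rho> > 0" "\<rho> < 1"
    have rk: "vnorm (kk \<rho>) > 0" using kf(2)[OF rho(1)] rho by simp
    have "cmod (det (Lm n h U (kk \<rho>) (\<i> * of_real \<rho> * \<nu>))) \<ge>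
        cmod (det (cmat (P_mat n h (kk \<rho>)))) * \<bar>Re (\<i> * of_real \<rho> * \<nu>)\<bar> ^ (2 * n)"
      by (rule crit[OF h rk stab[OF rho(1)]])
    moreover have "\<bar>Re (\<i> * of_real \<rho> * \<nu>)\<bar> = \<rho> * \<bar>Im \<nu>\<bar>" using rho by (simp add: abs_mult)
    moreover have "cmod (det (of_real (\<rho>^2) \<cdot>\<^sub>m cmat (P_mat n h (kk \<rho>)))) = \<rho> ^ (2 * n) * cmod (det (cmat (P_mat n h (kk \<rho>))))"
      using P_mat_carrier[of n h "kk \<rho>"] rho by (simp add: norm_mult norm_power power_mult)
    ultimately show "g \<rho> \<le> f \<rho>" unfolding f_def g_def by (simp add: power_mult_distrib algebra_simps)
  qed simp
  have "cmod (det (Kmat n c')) * \<bar>Im \<nu>\<bar> ^ (2 * n) \<le> cmod (det (- Kmat n c))"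
    by (rule tendsto_le[OF trivial_limit_at_right_real flim glim ev])
  moreover have "cmod (det (Kmat n c')) * \<bar>Im \<nu>\<bar> ^ (2 * n) > 0" using detT im by simp
  ultimately show False using detK by simp
qed



lemma inst:
  assumes h: "\<forall>i\<le>n. h i < h (Suc i)" and n: "n \<ge> 1"
    and U: "\<forall>i\<le>n. U i \<in> carrier_vec m"
    and i0: "i0 \<le> n" "U i0 \<noteq> 0\<^sub>v m"
  shows "\<exists>k \<in> carrier_vec m. k \<noteq> 0\<^sub>v m \<and> (\<exists>z. eigenvalue (N_mat n h U k) z \<and> Re z > 0)"
proof -
  define e where "e = U i0"
  have e: "e \<in> carrier_vec m" "e \<noteq> 0\<^sub>v m" using U i0 unfolding e_def by auto
  have ee: "e \<bullet> e = (vnorm e)^2" unfolding vnorm_def using self_sprod_pos[OF e] by simp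
  have "\<exists>k\<in>carrier_vec m. k \<noteq> 0\<^sub>v m \<and> (\<exists>z. det (Lm n h U k z) = 0 \<and> Re z > 0)"
  proof (cases "\<forall>j\<le>n. e \<bullet> U j = (vnorm e)^2")
    case True
    then show ?thesis by (rule unstable_const[OF h n e U])
  next
    case False
    then obtain j0 where j0: "j0 \<le> n" "e \<bullet> U j0 \<noteq> (vnorm e)^2" by auto
    have r: "vnorm e > 0" by (rule vnorm_pos[OF e])
    have "e \<bullet> U j0 / vnorm e \<noteq> e \<bullet> U i0 / vnorm e"
      using j0(2) r ee unfolding e_def[symmetric] by (simp add: divide_cancel_right)
    from unstable_var[OF h n e U i0(1) j0(1) this]
    obtain k z where k: "k \<in> carrier_vec m" "k \<noteq> 0\<^sub>v m" and z: "det (Lm n h U k z) = 0" "Re z \<noteq> 0"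
      by blast
    show ?thesis
    proof (cases "Re z > 0")
      case True then show ?thesis using k z by blast
    next
      case False
      then have "Re (- cnj z) > 0" using z(2) by simp
      then show ?thesis using k Lm_sym[OF z(1)] by blast
    qed
  qed
  then obtain k z where k: "k \<in> carrier_vec m" "k \<noteq> 0\<^sub>v m" and z: "det (Lm n h U k z) = 0" "Re z > 0"
    by blast
  have "eigenvalue (N_mat n h U k) z" using eig_Lm[OF h vnorm_pos[OF k]] z by simp
  then show ?thesis using k z by blast
qed

lemma stab_all:
  assumes h: "\<forall>i\<le>n. h i < h (Suc i)"
    and U0: "\<forall>i\<le>n. U i = 0\<^sub>v m"
    and k: "k \<in> carrier_vec m" "k \<noteq> 0\<^sub>v m"
    and ev: "eigenvalue (N_mat n h U k) z"
  shows "Re z = 0"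
proof -
  have rk: "vnorm k > 0" by (rule vnorm_pos[OF k])
  have "\<forall>l\<le>n. k \<bullet> U l = 0" using U0 k(1) by simp
  moreover have "det (Lm n h U k z) = 0" using ev eig_Lm[OF h rk] by simp
  ultimately show ?thesis by (rule stable[OF h rk])
qed

theorem corollary5p4:
  fixes m n :: nat and h :: "nat \<Rightarrow> real" and U :: "nat \<Rightarrow> real vec"
  assumes "m \<ge> 1" and "n \<ge> 1"
    and "\<forall>i\<le>n. h i < h (Suc i)"
    and "\<forall>i\<le>n. U i \<in> carrier_vec m"
  shows "((\<forall>i\<le>n. U i = 0\<^sub>v m) \<longleftrightarrow>
           (\<forall>k \<in> carrier_vec m. k \<noteq> 0\<^sub>v m \<longrightarrow>
              (\<forall>z. eigenvalue (N_mat n h U k) z \<longrightarrow> Re z = 0)))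
       \<and> ((\<exists>i\<le>n. U i \<noteq> 0\<^sub>v m) \<longrightarrow>
           (\<exists>k \<in> carrier_vec m. k \<noteq> 0\<^sub>v m \<and>
              (\<exists>z. eigenvalue (N_mat n h U k) z \<and> Re z > 0)))"
proof -
  have h: "\<forall>i\<le>n. h i < h (Suc i)" by fact
  have n: "n \<ge> 1" by fact
  have U: "\<forall>i\<le>n. U i \<in> carrier_vec m" by fact
  have I: "(\<exists>i\<le>n. U i \<noteq> 0\<^sub>v m) \<longrightarrow>
           (\<exists>k \<in> carrier_vec m. k \<noteq> 0\<^sub>v m \<and> (\<exists>z. eigenvalue (N_mat n h U k) z \<and> Re z > 0))"
    using inst[OF h n U] by blast
  have S: "(\<forall>i\<le>n. U i = 0\<^sub>v m) \<longrightarrow>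
           (\<forall>k \<in> carrier_vec m. k \<noteq> 0\<^sub>v m \<longrightarrow> (\<forall>z. eigenvalue (N_mat n h U k) z \<longrightarrow> Re z = 0))"
    using stab_all[OF h] by blast
  have "(\<forall>k \<in> carrier_vec m. k \<noteq> 0\<^sub>v m \<longrightarrow> (\<forall>z. eigenvalue (N_mat n h U k) z \<longrightarrow> Re z = 0))
      \<longrightarrow> (\<forall>i\<le>n. U i = 0\<^sub>v m)"
  proof (intro impI, rule ccontr)
    assume a: "\<forall>k \<in> carrier_vec m. k \<noteq> 0\<^sub>v m \<longrightarrow> (\<forall>z. eigenvalue (N_mat n h U k) z \<longrightarrow> Re z = 0)"
      and b: "\<not> (\<forall>i\<le>n. U i = 0\<^sub>v m)"
    then obtain k z where "k \<in> carrier_vec m" "k \<noteq> 0\<^sub>v m" "eigenvalue (N_mat n h U k) z" "Re z > 0"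
      using I by blast
    then show False using a by fastforce
  qed
  then show ?thesis using I S by blast
qed


end
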